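(* Let $r_{2,4}(n)=\operatorname{CT}_{X_1,\ldots,X_4}\big(\sigma_2(Y_1,\ldots,Y_4)\big)^{n}$ with $Y_j=X_j+X_j^{-1}$. Then $r_{2,4}(n)$ satisfies a linear recurrence of order $5$: there exist polynomials $h_0(n),\ldots,h_5(n)\in\mathbb{Z}[n]$ of degree $6$ such that $\sum_{j=0}^{5}h_j(n)\,r_{2,4}(n+j)=0$ for all $n\ge 0$. Accordingly, $R_{2,4}(z)=\sum_{n\ge0}r_{2,4}(n)z^n$ satisfies a linear differential equation (in $\vartheta=z\frac{d}{dz}$ with polynomial coefficients in $z$) of order $11$ and degree $5$.
   Context: $\sigma_2(y_1,\ldots,y_4)=\sum_{1\le a<b\le4}y_ay_b$; $\operatorname{CT}$ denotes the constant term (coefficient of $X_1^0\cdots X_4^0$) of a Laurent polynomial. A differential equation $\sum_{k=0}^K u_k(z)\vartheta^k F=0$ with $u_k\in\mathbb{Q}[z]$, $u_K\ne0$, has order $K$ and degree equal to the maximal degree of the $u_k$. *)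

theory Defs
  imports "HOL-Computational_Algebra.Computational_Algebra"
begin

text \<open>Exponent vectors (indexed by j = 0..3, i.e. X_1..X_4) of the monomials of
  sigma_2(Y_1,...,Y_4) with Y_j = X_j + X_j^{-1}.  Expanding, sigma_2(Y) is the sum of
  the 24 distinct monomials X_a^{ea} X_b^{eb} (a < b, ea, eb in {-1,1}), each with
  coefficient 1.\<close>
definition sigma2_monomials :: "(nat \<Rightarrow> int) set" where
  "sigma2_monomials =
     {e. \<exists>a b ea eb. a < b \<and> b < 4 \<and> ea \<in> {-1, 1} \<and> eb \<in> {-1, 1} \<and>
          e = (\<lambda>j. if j = a then ea else if j = b then eb else 0)}"

text \<open>Constant term of sigma_2(Y)^n: expanding the n-fold product, it is the number of
  length-n sequences of monomials whose exponent vectors sum to zero.\<close>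
definition r24 :: "nat \<Rightarrow> nat" where
  "r24 n = card {xs. length xs = n \<and> set xs \<subseteq> sigma2_monomials \<and>
                     (\<forall>j. (\<Sum>x\<leftarrow>xs. x j) = 0)}"

definition R24 :: "rat fps" where
  "R24 = Abs_fps (\<lambda>n. of_nat (r24 n))"

definition theta :: "rat fps \<Rightarrow> rat fps" where
  "theta F = fps_X * fps_deriv F"

end

theory Submission
  imports Defs "HOL-Library.Product_Plus"
begin

type_synonym v4 = "int \<times> int \<times> int \<times> int"

definition steps :: "v4 list" where "steps = [((-1), (-1), 0, 0), ((-1), 1, 0, 0), (1, (-1), 0, 0), (1, 1, 0, 0), ((-1), 0, (-1), 0), ((-1), 0, 1, 0), (1, 0, (-1), 0), (1, 0, 1, 0), ((-1), 0, 0, (-1)), ((-1), 0, 0, 1), (1, 0, 0, (-1)), (1, 0, 0, 1), (0, (-1), (-1), 0), (0, (-1), 1, 0), (0, 1, (-1), 0), (0, 1, 1, 0), (0, (-1), 0, (-1)), (0, (-1), 0, 1), (0, 1, 0, (-1)), (0, 1, 0, 1), (0, 0, (-1), (-1)), (0, 0, (-1), 1), (0, 0, 1, (-1)), (0, 0, 1, 1)]"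

definition SS :: "v4 set" where "SS = set steps"

lemma finite_SS: "finite SS" by (simp add: SS_def)

lemma distinct_steps: "distinct steps" by (simp add: steps_def)

lemma sum_SS: "(\<Sum>s\<in>SS. f s) = sum_list (map f steps)"
  by (simp add: SS_def sum.distinct_set_conv_list distinct_steps)

fun W :: "nat \<Rightarrow> v4 \<Rightarrow> int" where
  "W 0 u = (if u = 0 then 1 else 0)"
| "W (Suc k) u = (\<Sum>s\<in>SS. W k (u - s))"

definition cnt :: "nat \<Rightarrow> v4 \<Rightarrow> nat" where
  "cnt n u = card {xs. length xs = n \<and> set xs \<subseteq> SS \<and> sum_list xs = u}"

lemma finite_lists_SS: "finite {xs. length xs = n \<and> set xs \<subseteq> SS \<and> P xs}"
proof -
  have "finite {xs. set xs \<subseteq> SS \<and> length xs = n}"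
    using finite_lists_length_eq[OF finite_SS] by simp
  then show ?thesis by (rule rev_finite_subset) auto
qed

lemma cnt_Suc: "cnt (Suc n) u = (\<Sum>s\<in>SS. cnt n (u - s))"
proof -
  define A where "A s = {ys. length ys = n \<and> set ys \<subseteq> SS \<and> sum_list ys = u - s}" for s
  have eq: "{xs. length xs = Suc n \<and> set xs \<subseteq> SS \<and> sum_list xs = u} = (\<Union>s\<in>SS. Cons s ` A s)"
  proof (rule set_eqI, rule iffI)
    fix xs assume "xs \<in> {xs. length xs = Suc n \<and> set xs \<subseteq> SS \<and> sum_list xs = u}"
    then obtain s ys where xs: "xs = s # ys" and "length ys = n" "s \<in> SS" "set ys \<subseteq> SS" "s + sum_list ys = u"
      by (cases xs) auto
    then have "sum_list ys = u - s" by (simp add: algebra_simps)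
    then show "xs \<in> (\<Union>s\<in>SS. Cons s ` A s)" using xs \<open>length ys = n\<close> \<open>s \<in> SS\<close> \<open>set ys \<subseteq> SS\<close>
      unfolding A_def by blast
  next
    fix xs assume "xs \<in> (\<Union>s\<in>SS. Cons s ` A s)"
    then show "xs \<in> {xs. length xs = Suc n \<and> set xs \<subseteq> SS \<and> sum_list xs = u}"
      unfolding A_def by (auto simp: algebra_simps)
  qed
  have "cnt (Suc n) u = card (\<Union>s\<in>SS. Cons s ` A s)" unfolding cnt_def eq ..
  also have "\<dots> = (\<Sum>s\<in>SS. card (Cons s ` A s))"
    by (rule card_UN_disjoint) (auto simp: finite_SS A_def finite_lists_SS)
  also have "\<dots> = (\<Sum>s\<in>SS. card (A s))"
    by (rule sum.cong) (auto simp: card_image)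
  also have "\<dots> = (\<Sum>s\<in>SS. cnt n (u - s))" by (simp add: A_def cnt_def)
  finally show ?thesis .
qed

lemma cnt_0: "cnt 0 u = (if u = 0 then 1 else 0)"
proof -
  have "{xs. length xs = 0 \<and> set xs \<subseteq> SS \<and> sum_list xs = u} = (if u = 0 then {[]} else {})"
    by auto
  then show ?thesis by (simp add: cnt_def)
qed

lemma W_cnt: "W n u = int (cnt n u)"
  by (induction n arbitrary: u) (simp_all add: cnt_0 cnt_Suc)

definition mon :: "nat \<Rightarrow> nat \<Rightarrow> int \<Rightarrow> int \<Rightarrow> nat \<Rightarrow> int" where
  "mon a b ea eb = (\<lambda>j. if j = a then ea else if j = b then eb else 0)"

definition fv :: "(nat \<Rightarrow> int) \<Rightarrow> v4" where
  "fv e = (e 0, e 1, e 2, e 3)"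

definition idxl :: "(nat \<times> nat \<times> int \<times> int) list" where
  "idxl = [(0, 1, -1, -1), (0, 1, -1, 1), (0, 1, 1, -1), (0, 1, 1, 1), (0, 2, -1, -1), (0, 2, -1, 1), (0, 2, 1, -1), (0, 2, 1, 1), (0, 3, -1, -1), (0, 3, -1, 1), (0, 3, 1, -1), (0, 3, 1, 1), (1, 2, -1, -1), (1, 2, -1, 1), (1, 2, 1, -1), (1, 2, 1, 1), (1, 3, -1, -1), (1, 3, -1, 1), (1, 3, 1, -1), (1, 3, 1, 1), (2, 3, -1, -1), (2, 3, -1, 1), (2, 3, 1, -1), (2, 3, 1, 1)]"

lemma steps_idxl: "steps = map (\<lambda>(a,b,ea,eb). fv (mon a b ea eb)) idxl"
  by (simp add: steps_def idxl_def fv_def mon_def)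

lemma idxl_mem: "(a,b,ea,eb) \<in> set idxl \<longleftrightarrow> a < b \<and> b < 4 \<and> ea \<in> {-1,1} \<and> eb \<in> {-1,1}"
proof
  assume "(a,b,ea,eb) \<in> set idxl" then show "a < b \<and> b < 4 \<and> ea \<in> {-1,1} \<and> eb \<in> {-1,1}"
    by (auto simp: idxl_def)
next
  assume H: "a < b \<and> b < 4 \<and> ea \<in> {-1,1} \<and> eb \<in> {-1,1}"
  then have "a = 0 \<and> b = 1 \<or> a = 0 \<and> b = 2 \<or> a = 0 \<and> b = 3 \<or> a = 1 \<and> b = 2 \<or> a = 1 \<and> b = 3 \<or> a = 2 \<and> b = 3" by arith
  moreover have "ea = -1 \<or> ea = 1" "eb = -1 \<or> eb = 1" using H by auto
  ultimately show "(a,b,ea,eb) \<in> set idxl" 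
    by (elim disjE conjE; simp add: idxl_def)
qed

lemma SM_alt: "sigma2_monomials = (\<lambda>(a,b,ea,eb). mon a b ea eb) ` set idxl"
proof -
  have "sigma2_monomials = {mon a b ea eb | a b ea eb. (a,b,ea,eb) \<in> set idxl}"
    unfolding sigma2_monomials_def idxl_mem mon_def by blast
  also have "\<dots> = (\<lambda>(a,b,ea,eb). mon a b ea eb) ` set idxl" by force
  finally show ?thesis .
qed

lemma fv_SM: "fv ` sigma2_monomials = SS"
  unfolding SM_alt SS_def steps_idxl set_map image_image by (rule image_cong) (auto split: prod.splits)

lemma SM_high: "e \<in> sigma2_monomials \<Longrightarrow> 4 \<le> j \<Longrightarrow> e j = 0"
  unfolding sigma2_monomials_def by auto

lemma inj_fv: "inj_on fv sigma2_monomials"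
proof (rule inj_onI)
  fix x y assume x: "x \<in> sigma2_monomials" and y: "y \<in> sigma2_monomials" and "fv x = fv y"
  then have l: "x j = y j" if "j < 4" for j
    using that by (auto simp: fv_def less_Suc_eq numeral_eq_Suc)
  show "x = y"
  proof
    fix j show "x j = y j"
      using l[of j] SM_high[OF x, of j] SM_high[OF y, of j] by (cases "j < 4") auto
  qed
qed

lemma sum_list_fv: "sum_list (map fv xs) = ((\<Sum>x\<leftarrow>xs. x 0), (\<Sum>x\<leftarrow>xs. x 1), (\<Sum>x\<leftarrow>xs. x 2), (\<Sum>x\<leftarrow>xs. x 3))"
  by (induction xs) (auto simp: fv_def zero_prod_def)

lemma sum_list_zero_high: "set xs \<subseteq> sigma2_monomials \<Longrightarrow> 4 \<le> j \<Longrightarrow> (\<Sum>x\<leftarrow>xs. x j) = 0"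
  by (induction xs) (auto simp: SM_high)

lemma r24_cnt: "r24 n = cnt n 0"
proof -
  define A where "A = {xs. length xs = n \<and> set xs \<subseteq> sigma2_monomials \<and> (\<forall>j. (\<Sum>x\<leftarrow>xs. x j) = 0)}"
  define B where "B = {xs. length xs = n \<and> set xs \<subseteq> SS \<and> sum_list xs = 0}"
  have cond: "(\<forall>j. (\<Sum>x\<leftarrow>xs. x j) = 0) \<longleftrightarrow> sum_list (map fv xs) = 0"
    if "set xs \<subseteq> sigma2_monomials" for xs :: "(nat \<Rightarrow> int) list"
  proof
    assume "\<forall>j. (\<Sum>x\<leftarrow>xs. x j) = 0" then show "sum_list (map fv xs) = 0"
      by (simp add: sum_list_fv) (simp add: zero_prod_def)
  next
    assume "sum_list (map fv xs) = 0"
    then have "(\<Sum>x\<leftarrow>xs. x j) = 0" if "j < 4" for j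
      using that by (auto simp: sum_list_fv zero_prod_def less_Suc_eq numeral_eq_Suc)
    then show "\<forall>j. (\<Sum>x\<leftarrow>xs. x j) = 0"
      using sum_list_zero_high[OF \<open>set xs \<subseteq> sigma2_monomials\<close>] by (metis not_le)
  qed
  have inj: "inj_on (map fv) A"
  proof (rule inj_onI)
    fix xs ys assume "xs \<in> A" "ys \<in> A" "map fv xs = map fv ys"
    moreover have "inj_on fv (set xs \<union> set ys)"
      using \<open>xs \<in> A\<close> \<open>ys \<in> A\<close> unfolding A_def
      by (intro inj_on_subset[OF inj_fv]) auto
    ultimately show "xs = ys" using map_inj_on by blast
  qed
  have img: "map fv ` A = B"
  proof (rule set_eqI, rule iffI)
    fix ys assume "ys \<in> map fv ` A"
    then obtain xs where "xs \<in> A" "ys = map fv xs" by auto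
    moreover have "set ys \<subseteq> SS"
      using \<open>xs \<in> A\<close> \<open>ys = map fv xs\<close> fv_SM unfolding A_def by auto
    ultimately show "ys \<in> B" unfolding A_def B_def using cond by auto
  next
    fix ys assume ys: "ys \<in> B"
    define xs where "xs = map (inv_into sigma2_monomials fv) ys"
    have s: "set ys \<subseteq> fv ` sigma2_monomials" using ys fv_SM unfolding B_def by auto
    have m: "map fv xs = ys" unfolding xs_def using s
      by (induction ys) (auto simp: f_inv_into_f)
    have "set xs \<subseteq> sigma2_monomials" unfolding xs_def using s
      by (auto simp: inv_into_into)
    moreover have "length xs = n" using ys unfolding xs_def B_def by simp
    moreover have "sum_list (map fv xs) = 0" using ys m unfolding B_def by simp
    ultimately have "xs \<in> A" using cond unfolding A_def by blast
    then show "ys \<in> map fv ` A" using m by auto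
  qed
  have "r24 n = card A" by (simp add: r24_def A_def)
  also have "\<dots> = card B" using card_image[OF inj] img by simp
  also have "\<dots> = cnt n 0" by (simp add: B_def cnt_def)
  finally show ?thesis .
qed

lemma r24_W: "int (r24 n) = W n 0"
  by (simp add: r24_cnt W_cnt)

fun l1 :: "v4 \<Rightarrow> int" where "l1 (a,b,c,d) = \<bar>a\<bar> + \<bar>b\<bar> + \<bar>c\<bar> + \<bar>d\<bar>"
fun psum :: "v4 \<Rightarrow> int" where "psum (a,b,c,d) = a + b + c + d"
fun cp :: "nat \<Rightarrow> v4 \<Rightarrow> int" where
  "cp i (a,b,c,d) = (if i = 0 then a else if i = 1 then b else if i = 2 then c else d)"

lemma cp_diff: "cp i (u - v) = cp i u - cp i v"
  by (cases u; cases v) auto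
lemma cp_add: "cp i (u + v) = cp i u + cp i v"
  by (cases u; cases v) auto
lemma cp_uminus: "cp i (- u) = - cp i u"
  by (cases u) auto

lemma l1_add: "l1 (u + v) \<le> l1 u + l1 v"
proof -
  obtain a b c d where u: "u = (a,b,c,d)" by (cases u) auto
  obtain a' b' c' d' where v: "v = (a',b',c',d')" by (cases v) auto
  show ?thesis using abs_triangle_ineq[of a a'] abs_triangle_ineq[of b b'] abs_triangle_ineq[of c c']
      abs_triangle_ineq[of d d'] by (simp add: u v)
qed
lemma l1_nonneg: "0 \<le> l1 u" by (cases u) auto
lemma psum_add: "psum (u + v) = psum u + psum v"
  by (cases u; cases v) auto
lemma l1_uminus: "l1 (- u) = l1 u" by (cases u) auto

lemma SS_props: "s \<in> SS \<Longrightarrow> l1 s = 2 \<and> even (psum s) \<and> (\<forall>i. \<bar>cp i s\<bar> \<le> 1)"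
  by (auto simp: SS_def steps_def)

lemma W_supp: "W k u \<noteq> 0 \<Longrightarrow> l1 u \<le> 2 * int k \<and> even (psum u)"
proof (induction k arbitrary: u)
  case 0
  then show ?case by (auto simp: zero_prod_def split: if_splits)
next
  case (Suc k)
  have "\<exists>s\<in>SS. W k (u - s) \<noteq> 0"
  proof (rule ccontr)
    assume "\<not> (\<exists>s\<in>SS. W k (u - s) \<noteq> 0)"
    then have "W (Suc k) u = 0" by (auto intro: sum.neutral)
    with Suc.prems show False by simp
  qed
  then obtain s where s: "s \<in> SS" "W k (u - s) \<noteq> 0" by blast
  from Suc.IH[OF s(2)] have h: "l1 (u - s) \<le> 2 * int k" "even (psum (u - s))" by auto
  have "l1 u \<le> l1 (u - s) + l1 s" using l1_add[of "u - s" s] by simp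
  moreover have "psum u = psum (u - s) + psum s" using psum_add[of "u - s" s] by simp
  ultimately show ?case using h SS_props[OF s(1)] by auto
qed

lemma W_zero: "\<not> (l1 u \<le> 2 * int k \<and> even (psum u)) \<Longrightarrow> W k u = 0"
  using W_supp by blast

lemma W_inv:
  assumes add: "\<And>x y. g (x - y) = g x - g y" and inj: "inj g" and gS: "g ` SS = SS"
  shows "W k (g u) = W k u"
proof (induction k arbitrary: u)
  case 0
  have g0: "g 0 = 0" using add[of 0 0] by simp
  have "g u = 0 \<longleftrightarrow> u = 0" using inj g0 by (metis injD)
  then show ?case by simp
next
  case (Suc k)
  have "W (Suc k) (g u) = (\<Sum>s\<in>g ` SS. W k (g u - s))" using gS by simp
  also have "\<dots> = (\<Sum>s\<in>SS. W k (g u - g s))"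
    by (subst sum.reindex) (auto intro: inj_on_subset[OF inj])
  also have "\<dots> = (\<Sum>s\<in>SS. W k (u - s))" by (simp add: add[symmetric] Suc.IH)
  finally show ?case by simp
qed

definition Bx :: "int \<Rightarrow> v4 set" where
  "Bx M = {-M..M} \<times> {-M..M} \<times> {-M..M} \<times> {-M..M}"

lemma finite_Bx: "finite (Bx M)" by (simp add: Bx_def)

lemma l1_Bx: "l1 u \<le> M \<Longrightarrow> u \<in> Bx M"
  by (cases u) (auto simp: Bx_def)

lemma CK: "a \<le> 6 \<Longrightarrow> W (a + b) x = (\<Sum>u\<in>Bx 12. W a u * W b (x - u))"
proof (induction b arbitrary: x)
  case 0
  have "(\<Sum>u\<in>Bx 12. W a u * W 0 (x - u)) = (\<Sum>u\<in>Bx 12. if u = x then W a x else 0)"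
    by (rule sum.cong) auto
  also have "\<dots> = (if x \<in> Bx 12 then W a x else 0)" by (simp add: finite_Bx)
  also have "\<dots> = W a x"
  proof (cases "x \<in> Bx 12")
    case False
    then have "\<not> l1 x \<le> 12" using l1_Bx by blast
    then have "W a x = 0" using W_zero[of x a] 0 by auto
    then show ?thesis by simp
  qed simp
  finally show ?case by simp
next
  case (Suc b)
  have "W (a + Suc b) x = (\<Sum>s\<in>SS. W (a + b) (x - s))" by simp
  also have "\<dots> = (\<Sum>s\<in>SS. \<Sum>u\<in>Bx 12. W a u * W b (x - s - u))"
    using Suc by simp
  also have "\<dots> = (\<Sum>u\<in>Bx 12. \<Sum>s\<in>SS. W a u * W b (x - u - s))"
    by (subst sum.swap) (simp add: algebra_simps)
  also have "\<dots> = (\<Sum>u\<in>Bx 12. W a u * W (Suc b) (x - u))"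
    by (simp add: sum_distrib_left)
  finally show ?case .
qed

lemma key: "cp i x * W (Suc m) x = int (Suc m) * (\<Sum>s\<in>SS. cp i s * W m (x - s))"
proof (induction m arbitrary: x)
  case 0
  have "cp i x * W (Suc 0) x = (\<Sum>s\<in>SS. cp i x * W 0 (x - s))"
    by (simp add: sum_distrib_left)
  also have "\<dots> = (\<Sum>s\<in>SS. cp i s * W 0 (x - s))"
    by (rule sum.cong) auto
  finally show ?case by simp
next
  case (Suc m)
  have "cp i x * W (Suc (Suc m)) x = (\<Sum>s\<in>SS. cp i x * W (Suc m) (x - s))"
    by (simp add: sum_distrib_left)
  also have "\<dots> = (\<Sum>s\<in>SS. cp i (x - s) * W (Suc m) (x - s)) + (\<Sum>s\<in>SS. cp i s * W (Suc m) (x - s))"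
    by (simp add: cp_diff algebra_simps sum.distrib[symmetric])
  also have "(\<Sum>s\<in>SS. cp i (x - s) * W (Suc m) (x - s))
      = (\<Sum>s\<in>SS. int (Suc m) * (\<Sum>s'\<in>SS. cp i s' * W m (x - s - s')))"
    using Suc.IH by simp
  also have "\<dots> = int (Suc m) * (\<Sum>s\<in>SS. \<Sum>s'\<in>SS. cp i s' * W m (x - s - s'))"
    by (simp add: sum_distrib_left)
  also have "\<dots> = int (Suc m) * (\<Sum>s'\<in>SS. \<Sum>s\<in>SS. cp i s' * W m (x - s - s'))"
    by (rule arg_cong[where f="\<lambda>x. int (Suc m) * x"], rule sum.swap)
  also have "\<dots> = int (Suc m) * (\<Sum>s'\<in>SS. cp i s' * (\<Sum>s\<in>SS. W m (x - s' - s)))"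
    by (simp add: sum_distrib_left diff_diff_eq add.commute)
  also have "\<dots> = int (Suc m) * (\<Sum>s'\<in>SS. cp i s' * W (Suc m) (x - s'))" by simp
  finally show ?case by (simp add: algebra_simps)
qed

lemma shift_sum:
  fixes F H :: "v4 \<Rightarrow> int"
  assumes s: "s \<in> SS" and supp: "\<And>t. F t \<noteq> 0 \<Longrightarrow> t \<in> Bx 10"
  shows "(\<Sum>u\<in>Bx 12. F (u - s) * H u) = (\<Sum>t\<in>Bx 10. F t * H (t + s))"
proof -
  have sub: "(\<lambda>t. t + s) ` Bx 10 \<subseteq> Bx 12"
  proof
    fix u assume "u \<in> (\<lambda>t. t + s) ` Bx 10"
    then obtain t where t: "t \<in> Bx 10" "u = t + s" by auto
    have c: "\<bar>cp i s\<bar> \<le> 1" for i using SS_props[OF s] by auto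
    obtain a b c d where tt: "t = (a,b,c,d)" by (cases t) auto
    obtain a' b' c' d' where ss: "s = (a',b',c',d')" by (cases s) auto
    show "u \<in> Bx 12" using t c[of 0] c[of 1] c[of 2] c[of 3]
      by (auto simp: Bx_def tt ss)
  qed
  have "(\<Sum>t\<in>Bx 10. F t * H (t + s)) = (\<Sum>u\<in>(\<lambda>t. t + s) ` Bx 10. F (u - s) * H u)"
    by (subst sum.reindex) (auto simp: inj_on_def)
  also have "\<dots> = (\<Sum>u\<in>Bx 12. F (u - s) * H u)"
  proof (rule sum.mono_neutral_left[OF finite_Bx sub])
    show "\<forall>u\<in>Bx 12 - (\<lambda>t. t + s) ` Bx 10. F (u - s) * H u = 0"
    proof
      fix u assume "u \<in> Bx 12 - (\<lambda>t. t + s) ` Bx 10"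
      then have "u - s \<notin> Bx 10" by (auto simp: image_iff)
      then have "F (u - s) = 0" using supp by blast
      then show "F (u - s) * H u = 0" by simp
    qed
  qed
  finally show ?thesis ..
qed

lemma cert_zero:
  assumes supp: "\<And>i t. Qf i t \<noteq> 0 \<Longrightarrow> t \<in> Bx 10"
  shows "(\<Sum>u\<in>Bx 12. (\<Sum>s\<in>SS. \<Sum>i<4. (int (Suc m) * cp i s + cp i (u - s)) * Qf i (u - s)) * W m (- u)) = 0"
proof -
  let ?n = "int (Suc m)"
  have "(\<Sum>u\<in>Bx 12. (\<Sum>s\<in>SS. \<Sum>i<4. (?n * cp i s + cp i (u - s)) * Qf i (u - s)) * W m (- u))
     = (\<Sum>s\<in>SS. \<Sum>i<4. \<Sum>u\<in>Bx 12. (?n * cp i s + cp i (u - s)) * Qf i (u - s) * W m (- u))"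
    by (simp add: sum_distrib_right) (subst sum.swap, subst (2) sum.swap, simp)
  also have "\<dots> = (\<Sum>s\<in>SS. \<Sum>i<4. \<Sum>t\<in>Bx 10. (?n * cp i s + cp i t) * Qf i t * W m (- (t + s)))"
  proof (rule sum.cong[OF refl], rule sum.cong[OF refl])
    fix s i assume "s \<in> SS"
    show "(\<Sum>u\<in>Bx 12. (?n * cp i s + cp i (u - s)) * Qf i (u - s) * W m (- u))
        = (\<Sum>t\<in>Bx 10. (?n * cp i s + cp i t) * Qf i t * W m (- (t + s)))"
    proof -
      have "\<And>t. (?n * cp i s + cp i t) * Qf i t \<noteq> 0 \<Longrightarrow> t \<in> Bx 10" using supp by auto
      from shift_sum[OF \<open>s \<in> SS\<close>, of "\<lambda>t. (?n * cp i s + cp i t) * Qf i t" "\<lambda>u. W m (- u)", OF this]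
      show ?thesis by (simp add: mult.assoc)
    qed
  qed
  also have "\<dots> = (\<Sum>i<4. \<Sum>t\<in>Bx 10. Qf i t * (\<Sum>s\<in>SS. (?n * cp i s + cp i t) * W m (- t - s)))"
    by (subst sum.swap, rule sum.cong[OF refl], subst sum.swap)
       (simp add: sum_distrib_left algebra_simps)
  also have "\<dots> = 0"
  proof (rule sum.neutral, rule ballI, rule sum.neutral, rule ballI)
    fix i t
    have "(\<Sum>s\<in>SS. (?n * cp i s + cp i t) * W m (- t - s))
        = ?n * (\<Sum>s\<in>SS. cp i s * W m (- t - s)) + cp i t * W (Suc m) (- t)"
      by (simp add: algebra_simps sum.distrib sum_distrib_left)
    also have "\<dots> = 0" using key[of i "- t" m] by (simp add: cp_uminus)
    finally show "Qf i t * (\<Sum>s\<in>SS. (?n * cp i s + cp i t) * W m (- t - s)) = 0" by simp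
  qed
  finally show ?thesis .
qed

definition qtab :: "int list list list list list" where "qtab = [[[[[0, 0, 0, 0, 0, 0], [0, 0, 0, 0, 0, 0], [0, 0, 0, 0, 0, 0], [0, 0, 0, 0, 0, 0], [0, 0, 0, 0, 0, 0], [0, 0, 0, 0, 0, 0], [0, 0, 0, 0, 0, 0], [0, 0, 0, 0, 0, 0], [0, 0, 0, 0, 0, 0], [0, 0, 0, 0, 0, 0], [0, 0, 0, 0, 0, 0]], [[0, 0, 0, 0, 0, 0], [0, 0, 0, 0, 0, 0], [0, 0, 0, 0, 0, 0], [0, 0, 0, 0, 0, 0], [0, 0, 0, 0, 0, 0], [0, 0, 0, 0, 0, 0], [0, 0, 0, 0, 0, 0], [0, 0, 0, 0, 0, 0], [0, 0, 0, 0, 0, 0]], [[0, 0, 0, 0, 0, 0], [0, 0, 0, 0, 0, 0], [0, 0, 0, 0, 0, 0], [0, 0, 0, 0, 0, 0], [0, 0, 0, 0, 0, 0], [0, 0, 0, 0, 0, 0], [0, 0, 0, 0, 0, 0]], [[0, 0, 0, 0, 0, 0], [0, 0, 0, 0, 0, 0], [0, 0, 0, 0, 0, 0], [0, 0, 0, 0, 0, 0], [0, 0, 0, 0, 0, 0]], [[0, 0, 0, 0, 0, 0], [0, 0, 0, 0, 0, 0], [0, 0, 0, 0, 0, 0]], [[0, 0, 0, 0, 0, 0]]], [[[0, 0, 0, 0, 0, 0], [0, 0, 0, 0, 0, 0], [0, 0, 0, 0, 0, 0], [0, 0, 0, 0, 0, 0], [0, 0, 0, 0, 0, 0], [0, 0,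 0, 0, 0, 0], [0, 0, 0, 0, 0, 0], [0, 0, 0, 0, 0, 0]], [[0, 0, 0, 0, 0, 0], [0, 0, 0, 0, 0, 0], [0, 0, 0, 0, 0, 0], [0, 0, 0, 0, 0, 0], [0, 0, 0, 0, 0, 0], [0, 0, 0, 0, 0, 0]], [[0, 0, 0, 0, 0, 0], [0, 0, 0, 0, 0, 0], [0, 0, 0, 0, 0, 0], [0, 0, 0, 0, 0, 0]], [[0, 0, 0, 0, 0, 0], [0, 0, 0, 0, 0, 0]]], [[[0, 0, 0, 0, 0, 0], [0, 0, 0, 0, 0, 0], [0, 0, 0, 0, 0, 0], [0, 0, 0, 0, 0, 0], [0, 0, 0, 0, 0, 0]], [[0, 0, 0, 0, 0, 0], [0, 0, 0, 0, 0, 0], [0, 0, 0, 0, 0, 0]], [[0, 0, 0, 0, 0, 0]]], [[[0, 0, 0, 0, 0, 0], [0, 0, 0, 0, 0, 0]]]], [[[[0, 0, 0, 0, 0, 0], [11626721472, 14249748640, 6989026304, 1713139488, 209582240, 10222240], [0, 0, 0, 0, 0, 0], [7660429680, 9016837400, 6004909168, 1880817988, 314917884, 18958936], [0, 0, 0, 0, 0, 0], [302981760, 199971200, 216644160, 65883712, 10267408, 860880], [0, 0, 0, 0, 0, 0], [0, 0, 0, 0, 0, 0], [0, 0, 0, 0, 0, 0], [0, 0, 0, 0, 0, 0]], [[0, 0, 0, 0, 0, 0], [7343933384, 7114407560, 2605653126, 186541108, (-78376524), (-22908610)], [0, 0, 0, 0, 0, 0], [2827483392, 4233633868, 2479139606,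 881220582, 181251638, 18356502], [0, 0, 0, 0, 0, 0], [0, 46678048, (-5086468), (-4528884), (-1436552), (-204680)], [0, 0, 0, 0, 0, 0], [0, 0, 0, 0, 0, 0]], [[0, 0, 0, 0, 0, 0], [3580658464, 3841973312, 1887458660, 519008293, 88413331, 8788256], [0, 0, 0, 0, 0, 0], [345213648, 139215616, 47208372, 9691232, 1015648, 37660], [0, 0, 0, 0, 0, 0], [0, 0, 0, 0, 0, 0]], [[0, 0, 0, 0, 0, 0], [295162684, 1104864386, 613186592, 125343648, 780092, (-2658002)], [0, 0, 0, 0, 0, 0], [(-140034144), (-31418644), 18673120, 8838540, 2050592, 204680]], [[0, 0, 0, 0, 0, 0], [104088480, 32219608, 3324928, 669012, 66920, 2660]]], [[[7769226240, 6652905168, 2465266176, (-78740868), (-130323546), (-39510036)], [0, 0, 0, 0, 0, 0], [5392286976, 6703369024, 3312678832, 1025712268, 180710374, 20106306], [0, 0, 0, 0, 0, 0], [165600000, 262176240, 113720944, 31828168, 4963440, 297640], [0, 0, 0, 0, 0, 0], [0, 0, 0, 0, 0, 0]], [[4721909696, 4452453440, 2030851144, 376471900, 36065656, (-159600)], [0, 0, 0, 0, 0, 0], [774629640, 930365388, 377300864, 49295976, (-4749368), (-203980)], [0, 0, 0, 0, 0, 0], [(-93356096), 10172936, 9057768, 2873104, 409360, 0]], [[1837965312, 2779181488, 1404768216, 299824872, 14542152, (-4062024)], [0, 0, 0, 0, 0, 0], [27600000, 13231880, 21435528, 6658716, 1166920, 96180]], [[62100000, 80904000, 43735900, 12562580,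 2022852, 148540]]], [[[0, 0, 0, 0, 0, 0], [1623617280, 1440361488, 552825104, 122475232, 18729440, 1428000], [0, 0, 0, 0, 0, 0], [123449632, 20243024, 1499088, (-1093328), (-274400), 8400]], [[0, 0, 0, 0, 0, 0], [93298824, 135312264, 51393484, 9110524, 607604, (-18620)]]], [[[697149504, 281833248, 44374524, 7028322, (-544740), 71190]]]], [[[[15538452480, 30881923584, 20635991424, 8932124400, 1963373520, 273738624], [0, 0, 0, 0, 0, 0], [6557859072, 8300836816, 3740010648, 530092952, (-98153248), (-35875688)], [0, 0, 0, 0, 0, 0], [1180571200, 5165473952, 4187808752, 1494404456, 268839932, 9301712], [0, 0, 0, 0, 0, 0], [0, (-186712192), 20345872, 18115536, 5746208, 818720], [0, 0, 0, 0, 0, 0], [0, 0, 0, 0, 0, 0]], [[7854542776, 11012447524, 5618422020, 1597496006, 235291322, 26758232], [0, 0, 0, 0, 0, 0], [4655365336, 6178277988, 3434094694, 986289411, 139246277, 6297974], [0, 0, 0, 0, 0, 0], [(-20806824), 121227684, 49399236, 1606060, (-3938852), (-664560)], [0, 0, 0, 0, 0, 0], [0, 0, 0, 0, 0, 0]], [[2696143488, 2258290592, 342742408, (-200825556), (-55971086), (-8068588)], [0, 0, 0, 0, 0, 0], [366467712, 307418348, (-53209338), (-36257894), (-731550), 3402082], [0, 0, 0, 0, 0, 0], [0, 46678048, (-5086468), (-4528884), (-1436552), (-204680)]], [[1088881416, 2336650108, 1180924560, 247354368, 2460744, (-5137644)], [0, 0, 0, 0, 0, 0], [(-58352184), (-22324188),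 22154676, 9519420, 2118772, 207480]], [[219712320, 75756560, 11052032, 2183652, 213640, 8260]]], [[[0, 0, 0, 0, 0, 0], [2943307040, 2616758448, 862809872, (-27050590), (-49250622), (-15140192)], [0, 0, 0, 0, 0, 0], [415241208, 261724252, 280325788, 106374580, 25202828, 2188160], [0, 0, 0, 0, 0, 0], [93356096, (-10172936), (-9057768), (-2873104), (-409360), 0]], [[0, 0, 0, 0, 0, 0], [941184648, 882995736, 211114090, 11127690, 4736474, 3150522], [0, 0, 0, 0, 0, 0], [(-10162408), 37814884, 4158504, (-397924), (-410500), (-79380)]], [[0, 0, 0, 0, 0, 0], [107125440, 120049640, 38150656, 5811836, (-5032), (-86100)]]], [[[1051107840, 574422552, 123157020, 12259992, (-13237020), (-3045840)], [0, 0, 0, 0, 0, 0], [82800000, 10062656, 30293064, 5698592, 1638832, 121240]], [[207270960, 175984520, 63706240, 11881680, 1128400, 43400]]]], [[[[0, 0, 0, 0, 0, 0], [4518872624, 10104813160, 7276300488, 3168427276, 738243268, 95911584], [0, 0, 0, 0, 0, 0], [898369056, 1643057488, 1438479900, 396433668, 25894532, (-12790068)], [0, 0, 0, 0, 0, 0], [24961440, (-85769184), (-4647012), (-3090412), (-1878972), (-57940)], [0, 0, 0, 0, 0, 0], [0, 0, 0, 0, 0, 0]], [[0, 0, 0, 0, 0, 0], [(-431899632), (-819684152), (-1088486532), (-600849761), (-167708679), (-19565356)], [0, 0, 0, 0, 0, 0], [(-140543668), 23196782, 82456246, 39339018, 10958222, 1101640], [0, 0, 0, 0, 0, 0], [46678048,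 (-5086468), (-4528884), (-1436552), (-204680), 0]], [[0, 0, 0, 0, 0, 0], [33663144, (-301556888), (-301845706), (-76685542), (-1599914), 2026202], [0, 0, 0, 0, 0, 0], [48101456, 15241488, (-12972092), (-7135360), (-1814272), (-203140)]], [[0, 0, 0, 0, 0, 0], [13782720, 13445760, 5305080, 1053240, 105000, 4200]]], [[[0, 0, 0, 0, 0, 9432450], [0, 0, 0, 0, 0, 0], [0, 0, 0, 0, 0, (-1903120)], [0, 0, 0, 0, 0, 0], [0, 0, 0, 0, 0, 8400]], [[88870304, 0, 0, 0, 0, 0], [0, 0, 0, 0, 0, 0], [(-1316568), 0, 0, 0, 0, 0]], [[(-22261056), 18219328, 19426316, 7617174, 1144212, 144970]]], [[[0, 0, 0, 0, 0, 0], [4419360, 0, 0, 0, 0, 0]]]], [[[[2102215680, 5119904160, 5931849840, 2777857848, 815330280, 98964840], [0, 0, 0, 0, 0, 0], [328697056, (-1439032224), (-1333345512), (-610428400), (-161501700), (-15393600)], [0, 0, 0, 0, 0, 0], [28238976, 133737600, 18586896, 4353940, 492520, 21700], [0, 0, 0, 0, 0, 0], [0, 0, 0, 0, 0, 0]], [[0, 0, 0, 0, 0, 1691480], [0, 0, 0, 0, 0, 0], [267878888, 30490944, 0, 0, 0, 0], [0, 0, 0, 0, 0, 0], [(-22572120), 2167128, 1150136, 284268, 33600, 1540]], [[0, 0, 0, 0, 0, 0], [0, 0, 0, 0, 0, 0], [(-48028080), (-24003240), 0, 0, 0, 0]], [[25920, 0, 0, 0, 0, 0]]], [[[0, 0,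 0, 0, 0, 0], [0, 0, 0, 0, 0, 0], [0, 0, 0, 0, 0, 0], [0, 0, 0, 0, 0, 6160]], [[0, 0, 0, 0, 0, 0], [0, 0, 0, 0, 0, 0]]], [[[0, 0, 0, 0, 0, 0]]]], [[[[0, 0, 0, 0, 0, 0], [110523648, 184850944, 122465632, 40200736, 6264640, 128960], [0, 0, 0, 0, 0, 0], [9863136, 30043968, 33802084, 19566812, 6474700, 905780], [0, 0, 0, 0, 0, 0], [276000, 305600, 134620, 29508, 3220, 140]], [[0, 0, 0, 0, 0, 0], [0, 0, 0, 0, 0, (-190400)], [0, 0, 0, 0, 0, 0], [0, 0, 0, 0, 0, 0]], [[0, 0, 0, 0, 0, 0], [0, 0, 0, 0, 0, 0]]], [[[0, 0, 0, 0, 0, 67200], [0, 0, 0, 0, 0, 0], [0, 0, 0, 0, 0, 0]], [[0, 0, 0, 0, 0, 0]]]], [[[[0, 0, 0, 0, 0, 0], [0, 0, 0, 0, 0, 0], [0, 0, 0, 0, 0, 0], [0, 0, 0, 0, 0, 0], [0, 0, 0, 0, 0, 0]], [[0, 0, 0, 0, 0, 0], [0, 0, 0, 0, 0, 0], [0, 0, 0, 0, 0, 0]], [[0, 0, 0, 0, 0, 0]]], [[[0, 0, 0, 0, 0, 0], [0, 0, 0, 0, 0, 0]]]], [[[[0, 0, 0, 0, 0, 0], [0, 0, 0, 0, 0, 0], [0, 0, 0, 0, 0, 0], [0, 0, 0, 0, 0, 0]], [[0, 0, 0, 0, 0, 0], [0, 0, 0, 0, 0, 0]]], [[[0, 0,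 0, 0, 0, 0]]]], [[[[0, 0, 0, 0, 0, 0], [0, 0, 0, 0, 0, 0], [0, 0, 0, 0, 0, 0]], [[0, 0, 0, 0, 0, 0]]]], [[[[0, 0, 0, 0, 0, 0], [0, 0, 0, 0, 0, 0]]]], [[[[0, 0, 0, 0, 0, 0]]]]]"

lemma qkeys:
  "qtab ! Suc 0 ! 0 ! 0 ! Suc 0 = [11626721472, 14249748640, 6989026304, 1713139488, 209582240, 10222240]"
  "qtab ! Suc 0 ! 0 ! 0 ! 3 = [7660429680, 9016837400, 6004909168, 1880817988, 314917884, 18958936]"
  "qtab ! Suc 0 ! 0 ! 0 ! 5 = [302981760, 199971200, 216644160, 65883712, 10267408, 860880]"
  "qtab ! Suc 0 ! 0 ! 0 ! 7 = [0, 0, 0, 0, 0, 0]"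
  "qtab ! Suc 0 ! 0 ! 0 ! 9 = [0, 0, 0, 0, 0, 0]"
  "qtab ! Suc 0 ! 0 ! Suc 0 ! Suc 0 = [7343933384, 7114407560, 2605653126, 186541108, (-78376524), (-22908610)]"
  "qtab ! Suc 0 ! 0 ! Suc 0 ! 3 = [2827483392, 4233633868, 2479139606, 881220582, 181251638, 18356502]"
  "qtab ! Suc 0 ! 0 ! Suc 0 ! 5 = [0, 46678048, (-5086468), (-4528884), (-1436552), (-204680)]"
  "qtab ! Suc 0 ! 0 ! Suc 0 ! 7 = [0, 0, 0, 0, 0, 0]"
  "qtab ! Suc 0 ! 0 ! 2 ! Suc 0 = [3580658464, 3841973312, 1887458660, 519008293, 88413331, 8788256]"
  "qtab ! Suc 0 ! 0 ! 2 ! 3 = [345213648, 139215616, 47208372, 9691232, 1015648, 37660]"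
  "qtab ! Suc 0 ! 0 ! 2 ! 5 = [0, 0, 0, 0, 0, 0]"
  "qtab ! Suc 0 ! 0 ! 3 ! Suc 0 = [295162684, 1104864386, 613186592, 125343648, 780092, (-2658002)]"
  "qtab ! Suc 0 ! 0 ! 3 ! 3 = [(-140034144), (-31418644), 18673120, 8838540, 2050592, 204680]"
  "qtab ! Suc 0 ! 0 ! 4 ! Suc 0 = [104088480, 32219608, 3324928, 669012, 66920, 2660]"
  "qtab ! Suc 0 ! Suc 0 ! 0 ! 0 = [7769226240, 6652905168, 2465266176, (-78740868), (-130323546), (-39510036)]"
  "qtab ! Suc 0 ! Suc 0 ! 0 ! 2 = [5392286976, 6703369024, 3312678832, 1025712268, 180710374, 20106306]"
  "qtab ! Suc 0 ! Suc 0 ! 0 ! 4 = [165600000, 262176240, 113720944, 31828168, 4963440, 297640]"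
  "qtab ! Suc 0 ! Suc 0 ! 0 ! 6 = [0, 0, 0, 0, 0, 0]"
  "qtab ! Suc 0 ! Suc 0 ! Suc 0 ! 0 = [4721909696, 4452453440, 2030851144, 376471900, 36065656, (-159600)]"
  "qtab ! Suc 0 ! Suc 0 ! Suc 0 ! 2 = [774629640, 930365388, 377300864, 49295976, (-4749368), (-203980)]"
  "qtab ! Suc 0 ! Suc 0 ! Suc 0 ! 4 = [(-93356096), 10172936, 9057768, 2873104, 409360, 0]"
  "qtab ! Suc 0 ! Suc 0 ! 2 ! 0 = [1837965312, 2779181488, 1404768216, 299824872, 14542152, (-4062024)]"
  "qtab ! Suc 0 ! Suc 0 ! 2 ! 2 = [27600000, 13231880, 21435528, 6658716, 1166920, 96180]"
  "qtab ! Suc 0 ! Suc 0 ! 3 ! 0 = [62100000, 80904000, 43735900, 12562580, 2022852, 148540]"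
  "qtab ! Suc 0 ! 2 ! 0 ! Suc 0 = [1623617280, 1440361488, 552825104, 122475232, 18729440, 1428000]"
  "qtab ! Suc 0 ! 2 ! 0 ! 3 = [123449632, 20243024, 1499088, (-1093328), (-274400), 8400]"
  "qtab ! Suc 0 ! 2 ! Suc 0 ! Suc 0 = [93298824, 135312264, 51393484, 9110524, 607604, (-18620)]"
  "qtab ! Suc 0 ! 3 ! 0 ! 0 = [697149504, 281833248, 44374524, 7028322, (-544740), 71190]"
  "qtab ! 2 ! 0 ! 0 ! 0 = [15538452480, 30881923584, 20635991424, 8932124400, 1963373520, 273738624]"
  "qtab ! 2 ! 0 ! 0 ! 2 = [6557859072, 8300836816, 3740010648, 530092952, (-98153248), (-35875688)]"
  "qtab ! 2 ! 0 ! 0 ! 4 = [1180571200, 5165473952, 4187808752, 1494404456, 268839932, 9301712]"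
  "qtab ! 2 ! 0 ! 0 ! 6 = [0, (-186712192), 20345872, 18115536, 5746208, 818720]"
  "qtab ! 2 ! 0 ! 0 ! 8 = [0, 0, 0, 0, 0, 0]"
  "qtab ! 2 ! 0 ! Suc 0 ! 0 = [7854542776, 11012447524, 5618422020, 1597496006, 235291322, 26758232]"
  "qtab ! 2 ! 0 ! Suc 0 ! 2 = [4655365336, 6178277988, 3434094694, 986289411, 139246277, 6297974]"
  "qtab ! 2 ! 0 ! Suc 0 ! 4 = [(-20806824), 121227684, 49399236, 1606060, (-3938852), (-664560)]"
  "qtab ! 2 ! 0 ! Suc 0 ! 6 = [0, 0, 0, 0, 0, 0]"
  "qtab ! 2 ! 0 ! 2 ! 0 = [2696143488, 2258290592, 342742408, (-200825556), (-55971086), (-8068588)]"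
  "qtab ! 2 ! 0 ! 2 ! 2 = [366467712, 307418348, (-53209338), (-36257894), (-731550), 3402082]"
  "qtab ! 2 ! 0 ! 2 ! 4 = [0, 46678048, (-5086468), (-4528884), (-1436552), (-204680)]"
  "qtab ! 2 ! 0 ! 3 ! 0 = [1088881416, 2336650108, 1180924560, 247354368, 2460744, (-5137644)]"
  "qtab ! 2 ! 0 ! 3 ! 2 = [(-58352184), (-22324188), 22154676, 9519420, 2118772, 207480]"
  "qtab ! 2 ! 0 ! 4 ! 0 = [219712320, 75756560, 11052032, 2183652, 213640, 8260]"
  "qtab ! 2 ! Suc 0 ! 0 ! Suc 0 = [2943307040, 2616758448, 862809872, (-27050590), (-49250622), (-15140192)]"
  "qtab ! 2 ! Suc 0 ! 0 ! 3 = [415241208, 261724252, 280325788, 106374580, 25202828, 2188160]"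
  "qtab ! 2 ! Suc 0 ! 0 ! 5 = [93356096, (-10172936), (-9057768), (-2873104), (-409360), 0]"
  "qtab ! 2 ! Suc 0 ! Suc 0 ! Suc 0 = [941184648, 882995736, 211114090, 11127690, 4736474, 3150522]"
  "qtab ! 2 ! Suc 0 ! Suc 0 ! 3 = [(-10162408), 37814884, 4158504, (-397924), (-410500), (-79380)]"
  "qtab ! 2 ! Suc 0 ! 2 ! Suc 0 = [107125440, 120049640, 38150656, 5811836, (-5032), (-86100)]"
  "qtab ! 2 ! 2 ! 0 ! 0 = [1051107840, 574422552, 123157020, 12259992, (-13237020), (-3045840)]"
  "qtab ! 2 ! 2 ! 0 ! 2 = [82800000, 10062656, 30293064, 5698592, 1638832, 121240]"
  "qtab ! 2 ! 2 ! Suc 0 ! 0 = [207270960, 175984520, 63706240, 11881680, 1128400, 43400]"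
  "qtab ! 3 ! 0 ! 0 ! Suc 0 = [4518872624, 10104813160, 7276300488, 3168427276, 738243268, 95911584]"
  "qtab ! 3 ! 0 ! 0 ! 3 = [898369056, 1643057488, 1438479900, 396433668, 25894532, (-12790068)]"
  "qtab ! 3 ! 0 ! 0 ! 5 = [24961440, (-85769184), (-4647012), (-3090412), (-1878972), (-57940)]"
  "qtab ! 3 ! 0 ! 0 ! 7 = [0, 0, 0, 0, 0, 0]"
  "qtab ! 3 ! 0 ! Suc 0 ! Suc 0 = [(-431899632), (-819684152), (-1088486532), (-600849761), (-167708679), (-19565356)]"
  "qtab ! 3 ! 0 ! Suc 0 ! 3 = [(-140543668), 23196782, 82456246, 39339018, 10958222, 1101640]"
  "qtab ! 3 ! 0 ! Suc 0 ! 5 = [46678048, (-5086468), (-4528884), (-1436552), (-204680), 0]"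
  "qtab ! 3 ! 0 ! 2 ! Suc 0 = [33663144, (-301556888), (-301845706), (-76685542), (-1599914), 2026202]"
  "qtab ! 3 ! 0 ! 2 ! 3 = [48101456, 15241488, (-12972092), (-7135360), (-1814272), (-203140)]"
  "qtab ! 3 ! 0 ! 3 ! Suc 0 = [13782720, 13445760, 5305080, 1053240, 105000, 4200]"
  "qtab ! 3 ! Suc 0 ! 0 ! 0 = [0, 0, 0, 0, 0, 9432450]"
  "qtab ! 3 ! Suc 0 ! 0 ! 2 = [0, 0, 0, 0, 0, (-1903120)]"
  "qtab ! 3 ! Suc 0 ! 0 ! 4 = [0, 0, 0, 0, 0, 8400]"
  "qtab ! 3 ! Suc 0 ! Suc 0 ! 0 = [88870304, 0, 0, 0, 0, 0]"
  "qtab ! 3 ! Suc 0 ! Suc 0 ! 2 = [(-1316568), 0, 0, 0, 0, 0]"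
  "qtab ! 3 ! Suc 0 ! 2 ! 0 = [(-22261056), 18219328, 19426316, 7617174, 1144212, 144970]"
  "qtab ! 3 ! 2 ! 0 ! Suc 0 = [4419360, 0, 0, 0, 0, 0]"
  "qtab ! 4 ! 0 ! 0 ! 0 = [2102215680, 5119904160, 5931849840, 2777857848, 815330280, 98964840]"
  "qtab ! 4 ! 0 ! 0 ! 2 = [328697056, (-1439032224), (-1333345512), (-610428400), (-161501700), (-15393600)]"
  "qtab ! 4 ! 0 ! 0 ! 4 = [28238976, 133737600, 18586896, 4353940, 492520, 21700]"
  "qtab ! 4 ! 0 ! 0 ! 6 = [0, 0, 0, 0, 0, 0]"
  "qtab ! 4 ! 0 ! Suc 0 ! 0 = [0, 0, 0, 0, 0, 1691480]"
  "qtab ! 4 ! 0 ! Suc 0 ! 2 = [267878888, 30490944, 0, 0, 0, 0]"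
  "qtab ! 4 ! 0 ! Suc 0 ! 4 = [(-22572120), 2167128, 1150136, 284268, 33600, 1540]"
  "qtab ! 4 ! 0 ! 2 ! 0 = [0, 0, 0, 0, 0, 0]"
  "qtab ! 4 ! 0 ! 2 ! 2 = [(-48028080), (-24003240), 0, 0, 0, 0]"
  "qtab ! 4 ! 0 ! 3 ! 0 = [25920, 0, 0, 0, 0, 0]"
  "qtab ! 4 ! Suc 0 ! 0 ! Suc 0 = [0, 0, 0, 0, 0, 0]"
  "qtab ! 4 ! Suc 0 ! 0 ! 3 = [0, 0, 0, 0, 0, 6160]"
  "qtab ! 4 ! Suc 0 ! Suc 0 ! Suc 0 = [0, 0, 0, 0, 0, 0]"
  "qtab ! 4 ! 2 ! 0 ! 0 = [0, 0, 0, 0, 0, 0]"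
  "qtab ! 5 ! 0 ! 0 ! Suc 0 = [110523648, 184850944, 122465632, 40200736, 6264640, 128960]"
  "qtab ! 5 ! 0 ! 0 ! 3 = [9863136, 30043968, 33802084, 19566812, 6474700, 905780]"
  "qtab ! 5 ! 0 ! 0 ! 5 = [276000, 305600, 134620, 29508, 3220, 140]"
  "qtab ! 5 ! 0 ! Suc 0 ! Suc 0 = [0, 0, 0, 0, 0, (-190400)]"
  "qtab ! 5 ! 0 ! Suc 0 ! 3 = [0, 0, 0, 0, 0, 0]"
  "qtab ! 5 ! 0 ! 2 ! Suc 0 = [0, 0, 0, 0, 0, 0]"
  "qtab ! 5 ! Suc 0 ! 0 ! 0 = [0, 0, 0, 0, 0, 67200]"
  "qtab ! 5 ! Suc 0 ! 0 ! 2 = [0, 0, 0, 0, 0, 0]"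
  "qtab ! 5 ! Suc 0 ! Suc 0 ! 0 = [0, 0, 0, 0, 0, 0]"
  "qtab ! 6 ! 0 ! 0 ! 0 = [0, 0, 0, 0, 0, 0]"
  "qtab ! 6 ! 0 ! 0 ! 2 = [0, 0, 0, 0, 0, 0]"
  "qtab ! 6 ! 0 ! 0 ! 4 = [0, 0, 0, 0, 0, 0]"
  "qtab ! 6 ! 0 ! Suc 0 ! 0 = [0, 0, 0, 0, 0, 0]"
  "qtab ! 6 ! 0 ! Suc 0 ! 2 = [0, 0, 0, 0, 0, 0]"
  "qtab ! 6 ! 0 ! 2 ! 0 = [0, 0, 0, 0, 0, 0]"
  "qtab ! 6 ! Suc 0 ! 0 ! Suc 0 = [0, 0, 0, 0, 0, 0]"
  "qtab ! 7 ! 0 ! 0 ! Suc 0 = [0, 0, 0, 0, 0, 0]"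
  "qtab ! 7 ! 0 ! 0 ! 3 = [0, 0, 0, 0, 0, 0]"
  "qtab ! 7 ! 0 ! Suc 0 ! Suc 0 = [0, 0, 0, 0, 0, 0]"
  "qtab ! 7 ! Suc 0 ! 0 ! 0 = [0, 0, 0, 0, 0, 0]"
  "qtab ! 8 ! 0 ! 0 ! 0 = [0, 0, 0, 0, 0, 0]"
  "qtab ! 8 ! 0 ! 0 ! 2 = [0, 0, 0, 0, 0, 0]"
  "qtab ! 8 ! 0 ! Suc 0 ! 0 = [0, 0, 0, 0, 0, 0]"
  "qtab ! 9 ! 0 ! 0 ! Suc 0 = [0, 0, 0, 0, 0, 0]"
  "qtab ! 10 ! 0 ! 0 ! 0 = [0, 0, 0, 0, 0, 0]"
  by (simp_all add: qtab_def)

definition Wtab :: "int list list list list list" where "Wtab = [[[[[1, 0, 24, 192, 3384, 51840, 911040], [0, 0, 0, 0, 0, 0, 0], [0, 0, 6, 72, 1512, 26640, 514260], [0, 0, 0, 0, 0, 0, 0], [0, 0, 0, 0, 90, 2880, 81720], [0, 0, 0, 0, 0, 0, 0], [0, 0, 0, 0, 0, 0, 1860], [0, 0, 0, 0, 0, 0, 0], [0, 0, 0, 0, 0, 0, 0], [0, 0, 0, 0, 0, 0, 0], [0, 0, 0, 0, 0, 0, 0], [0, 0, 0, 0, 0, 0, 0], [0, 0, 0, 0, 0, 0, 0]], [[0, 1, 8, 141, 2160, 37960, 682080], [0, 0, 0, 0, 0, 0, 0], [0, 0, 0, 15, 384, 9390, 209280], [0, 0, 0, 0, 0, 0, 0],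 [0, 0, 0, 0, 0, 310, 14400], [0, 0, 0, 0, 0, 0, 0], [0, 0, 0, 0, 0, 0, 0], [0, 0, 0, 0, 0, 0, 0], [0, 0, 0, 0, 0, 0, 0], [0, 0, 0, 0, 0, 0, 0], [0, 0, 0, 0, 0, 0, 0]], [[0, 0, 1, 24, 640, 13280, 285045], [0, 0, 0, 0, 0, 0, 0], [0, 0, 0, 0, 28, 1280, 42390], [0, 0, 0, 0, 0, 0, 0], [0, 0, 0, 0, 0, 0, 795], [0, 0, 0, 0, 0, 0, 0], [0, 0, 0, 0, 0, 0, 0], [0, 0, 0, 0, 0, 0, 0], [0, 0, 0, 0, 0, 0, 0]], [[0, 0, 0, 1, 48, 2025, 59000], [0, 0, 0, 0, 0, 0, 0], [0, 0, 0, 0, 0, 45, 3240], [0, 0, 0, 0, 0, 0, 0], [0, 0, 0, 0, 0, 0, 0], [0, 0, 0, 0, 0, 0, 0], [0, 0, 0, 0, 0, 0, 0]], [[0, 0, 0, 0, 1, 80, 5016], [0, 0, 0, 0, 0, 0, 0], [0, 0, 0, 0, 0, 0, 66], [0, 0, 0, 0, 0, 0, 0], [0, 0, 0, 0, 0, 0, 0]], [[0, 0, 0, 0, 0, 1, 120], [0, 0, 0, 0, 0, 0, 0], [0, 0, 0, 0, 0, 0, 0]], [[0, 0, 0, 0, 0, 0, 1]]], [[[0, 0, 0, 0, 0, 0, 0], [0, 0, 2, 48, 948, 19180, 381720], [0, 0, 0, 0, 0, 0, 0], [0, 0, 0, 0, 48, 1960, 58680], [0, 0, 0, 0, 0, 0,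 0], [0, 0, 0, 0, 0, 0, 1200], [0, 0, 0, 0, 0, 0, 0], [0, 0, 0, 0, 0, 0, 0], [0, 0, 0, 0, 0, 0, 0], [0, 0, 0, 0, 0, 0, 0]], [[0, 0, 0, 0, 0, 0, 0], [0, 0, 0, 3, 148, 4410, 112470], [0, 0, 0, 0, 0, 0, 0], [0, 0, 0, 0, 0, 110, 6930], [0, 0, 0, 0, 0, 0, 0], [0, 0, 0, 0, 0, 0, 0], [0, 0, 0, 0, 0, 0, 0], [0, 0, 0, 0, 0, 0, 0]], [[0, 0, 0, 0, 0, 0, 0], [0, 0, 0, 0, 4, 335, 14940], [0, 0, 0, 0, 0, 0, 0], [0, 0, 0, 0, 0, 0, 210], [0, 0, 0, 0, 0, 0, 0], [0, 0, 0, 0, 0, 0, 0]], [[0, 0, 0, 0, 0, 0, 0], [0, 0, 0, 0, 0, 5, 636], [0, 0, 0, 0, 0, 0, 0], [0, 0, 0, 0, 0, 0, 0]], [[0, 0, 0, 0, 0, 0, 0], [0, 0, 0, 0, 0, 0, 6]]], [[[0, 0, 0, 6, 252, 6360, 154620], [0, 0, 0, 0, 0, 0, 0], [0, 0, 0, 0, 6, 520, 21180], [0, 0, 0, 0, 0, 0, 0], [0, 0, 0, 0, 0, 0, 300], [0, 0, 0, 0, 0, 0, 0], [0, 0, 0, 0, 0, 0, 0]], [[0, 0, 0, 0, 12, 840, 29850], [0, 0, 0, 0, 0, 0, 0], [0, 0, 0, 0, 0, 10, 1350], [0, 0, 0, 0, 0, 0, 0], [0, 0, 0, 0, 0, 0,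 0]], [[0, 0, 0, 0, 0, 20, 2130], [0, 0, 0, 0, 0, 0, 0], [0, 0, 0, 0, 0, 0, 15]], [[0, 0, 0, 0, 0, 0, 30]]], [[[0, 0, 0, 0, 0, 0, 0], [0, 0, 0, 0, 0, 30, 3120], [0, 0, 0, 0, 0, 0, 0], [0, 0, 0, 0, 0, 0, 20]], [[0, 0, 0, 0, 0, 0, 0], [0, 0, 0, 0, 0, 0, 60]]], [[[0, 0, 0, 0, 0, 0, 90]]]], [[[[0, 0, 6, 72, 1512, 26640, 514260], [0, 0, 0, 0, 0, 0, 0], [0, 0, 0, 6, 252, 6360, 154620], [0, 0, 0, 0, 0, 0, 0], [0, 0, 0, 0, 0, 180, 10080], [0, 0, 0, 0, 0, 0, 0], [0, 0, 0, 0, 0, 0, 0], [0, 0, 0, 0, 0, 0, 0], [0, 0, 0, 0, 0, 0, 0]], [[0, 0, 0, 15, 384, 9390, 209280], [0, 0, 0, 0, 0, 0, 0], [0, 0, 0, 0, 12, 840, 29850], [0, 0, 0, 0, 0, 0, 0], [0, 0, 0, 0, 0, 0, 480], [0, 0, 0, 0, 0, 0, 0], [0, 0, 0, 0, 0, 0, 0]], [[0, 0, 0, 0, 28, 1280, 42390], [0, 0, 0, 0, 0, 0, 0], [0, 0, 0, 0, 0, 20, 2130], [0, 0, 0, 0, 0, 0, 0], [0, 0, 0, 0, 0, 0, 0]], [[0, 0, 0, 0, 0, 45, 3240], [0, 0, 0, 0, 0, 0, 0], [0, 0, 0, 0, 0, 0, 30]], [[0, 0, 0, 0, 0, 0, 66]]],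 [[[0, 0, 0, 0, 0, 0, 0], [0, 0, 0, 0, 48, 1960, 58680], [0, 0, 0, 0, 0, 0, 0], [0, 0, 0, 0, 0, 30, 3120], [0, 0, 0, 0, 0, 0, 0], [0, 0, 0, 0, 0, 0, 0]], [[0, 0, 0, 0, 0, 0, 0], [0, 0, 0, 0, 0, 110, 6930], [0, 0, 0, 0, 0, 0, 0], [0, 0, 0, 0, 0, 0, 60]], [[0, 0, 0, 0, 0, 0, 0], [0, 0, 0, 0, 0, 0, 210]]], [[[0, 0, 0, 0, 0, 180, 10080], [0, 0, 0, 0, 0, 0, 0], [0, 0, 0, 0, 0, 0, 300]], [[0, 0, 0, 0, 0, 0, 480]]]], [[[[0, 0, 0, 0, 90, 2880, 81720], [0, 0, 0, 0, 0, 0, 0], [0, 0, 0, 0, 0, 180, 10080], [0, 0, 0, 0, 0, 0, 0], [0, 0, 0, 0, 0, 0, 90]], [[0, 0, 0, 0, 0, 310, 14400], [0, 0, 0, 0, 0, 0, 0], [0, 0, 0, 0, 0, 0, 480]], [[0, 0, 0, 0, 0, 0, 795]]], [[[0, 0, 0, 0, 0, 0, 0], [0, 0, 0, 0, 0, 0, 1200]]]], [[[[0, 0, 0, 0, 0, 0, 1860]]]]]"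

lemma wkeys:
  "Wtab ! 0 ! 0 ! 0 ! 0 = [1, 0, 24, 192, 3384, 51840, 911040]"
  "Wtab ! 0 ! 0 ! 0 ! 2 = [0, 0, 6, 72, 1512, 26640, 514260]"
  "Wtab ! 0 ! 0 ! 0 ! 4 = [0, 0, 0, 0, 90, 2880, 81720]"
  "Wtab ! 0 ! 0 ! 0 ! 6 = [0, 0, 0, 0, 0, 0, 1860]"
  "Wtab ! 0 ! 0 ! 0 ! 8 = [0, 0, 0, 0, 0, 0, 0]"
  "Wtab ! 0 ! 0 ! 0 ! 10 = [0, 0, 0, 0, 0, 0, 0]"
  "Wtab ! 0 ! 0 ! 0 ! 12 = [0, 0, 0, 0, 0, 0, 0]"
  "Wtab ! 0 ! 0 ! Suc 0 ! 0 = [0, 1, 8, 141, 2160, 37960, 682080]"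
  "Wtab ! 0 ! 0 ! Suc 0 ! 2 = [0, 0, 0, 15, 384, 9390, 209280]"
  "Wtab ! 0 ! 0 ! Suc 0 ! 4 = [0, 0, 0, 0, 0, 310, 14400]"
  "Wtab ! 0 ! 0 ! Suc 0 ! 6 = [0, 0, 0, 0, 0, 0, 0]"
  "Wtab ! 0 ! 0 ! Suc 0 ! 8 = [0, 0, 0, 0, 0, 0, 0]"
  "Wtab ! 0 ! 0 ! Suc 0 ! 10 = [0, 0, 0, 0, 0, 0, 0]"
  "Wtab ! 0 ! 0 ! 2 ! 0 = [0, 0, 1, 24, 640, 13280, 285045]"
  "Wtab ! 0 ! 0 ! 2 ! 2 = [0, 0, 0, 0, 28, 1280, 42390]"
  "Wtab ! 0 ! 0 ! 2 ! 4 = [0, 0, 0, 0, 0, 0, 795]"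
  "Wtab ! 0 ! 0 ! 2 ! 6 = [0, 0, 0, 0, 0, 0, 0]"
  "Wtab ! 0 ! 0 ! 2 ! 8 = [0, 0, 0, 0, 0, 0, 0]"
  "Wtab ! 0 ! 0 ! 3 ! 0 = [0, 0, 0, 1, 48, 2025, 59000]"
  "Wtab ! 0 ! 0 ! 3 ! 2 = [0, 0, 0, 0, 0, 45, 3240]"
  "Wtab ! 0 ! 0 ! 3 ! 4 = [0, 0, 0, 0, 0, 0, 0]"
  "Wtab ! 0 ! 0 ! 3 ! 6 = [0, 0, 0, 0, 0, 0, 0]"
  "Wtab ! 0 ! 0 ! 4 ! 0 = [0, 0, 0, 0, 1, 80, 5016]"
  "Wtab ! 0 ! 0 ! 4 ! 2 = [0, 0, 0, 0, 0, 0, 66]"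
  "Wtab ! 0 ! 0 ! 4 ! 4 = [0, 0, 0, 0, 0, 0, 0]"
  "Wtab ! 0 ! 0 ! 5 ! 0 = [0, 0, 0, 0, 0, 1, 120]"
  "Wtab ! 0 ! 0 ! 5 ! 2 = [0, 0, 0, 0, 0, 0, 0]"
  "Wtab ! 0 ! 0 ! 6 ! 0 = [0, 0, 0, 0, 0, 0, 1]"
  "Wtab ! 0 ! Suc 0 ! 0 ! Suc 0 = [0, 0, 2, 48, 948, 19180, 381720]"
  "Wtab ! 0 ! Suc 0 ! 0 ! 3 = [0, 0, 0, 0, 48, 1960, 58680]"
  "Wtab ! 0 ! Suc 0 ! 0 ! 5 = [0, 0, 0, 0, 0, 0, 1200]"
  "Wtab ! 0 ! Suc 0 ! 0 ! 7 = [0, 0, 0, 0, 0, 0, 0]"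
  "Wtab ! 0 ! Suc 0 ! 0 ! 9 = [0, 0, 0, 0, 0, 0, 0]"
  "Wtab ! 0 ! Suc 0 ! Suc 0 ! Suc 0 = [0, 0, 0, 3, 148, 4410, 112470]"
  "Wtab ! 0 ! Suc 0 ! Suc 0 ! 3 = [0, 0, 0, 0, 0, 110, 6930]"
  "Wtab ! 0 ! Suc 0 ! Suc 0 ! 5 = [0, 0, 0, 0, 0, 0, 0]"
  "Wtab ! 0 ! Suc 0 ! Suc 0 ! 7 = [0, 0, 0, 0, 0, 0, 0]"
  "Wtab ! 0 ! Suc 0 ! 2 ! Suc 0 = [0, 0, 0, 0, 4, 335, 14940]"
  "Wtab ! 0 ! Suc 0 ! 2 ! 3 = [0, 0, 0, 0, 0, 0, 210]"
  "Wtab ! 0 ! Suc 0 ! 2 ! 5 = [0, 0, 0, 0, 0, 0, 0]"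
  "Wtab ! 0 ! Suc 0 ! 3 ! Suc 0 = [0, 0, 0, 0, 0, 5, 636]"
  "Wtab ! 0 ! Suc 0 ! 3 ! 3 = [0, 0, 0, 0, 0, 0, 0]"
  "Wtab ! 0 ! Suc 0 ! 4 ! Suc 0 = [0, 0, 0, 0, 0, 0, 6]"
  "Wtab ! 0 ! 2 ! 0 ! 0 = [0, 0, 0, 6, 252, 6360, 154620]"
  "Wtab ! 0 ! 2 ! 0 ! 2 = [0, 0, 0, 0, 6, 520, 21180]"
  "Wtab ! 0 ! 2 ! 0 ! 4 = [0, 0, 0, 0, 0, 0, 300]"
  "Wtab ! 0 ! 2 ! 0 ! 6 = [0, 0, 0, 0, 0, 0, 0]"
  "Wtab ! 0 ! 2 ! Suc 0 ! 0 = [0, 0, 0, 0, 12, 840, 29850]"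
  "Wtab ! 0 ! 2 ! Suc 0 ! 2 = [0, 0, 0, 0, 0, 10, 1350]"
  "Wtab ! 0 ! 2 ! Suc 0 ! 4 = [0, 0, 0, 0, 0, 0, 0]"
  "Wtab ! 0 ! 2 ! 2 ! 0 = [0, 0, 0, 0, 0, 20, 2130]"
  "Wtab ! 0 ! 2 ! 2 ! 2 = [0, 0, 0, 0, 0, 0, 15]"
  "Wtab ! 0 ! 2 ! 3 ! 0 = [0, 0, 0, 0, 0, 0, 30]"
  "Wtab ! 0 ! 3 ! 0 ! Suc 0 = [0, 0, 0, 0, 0, 30, 3120]"
  "Wtab ! 0 ! 3 ! 0 ! 3 = [0, 0, 0, 0, 0, 0, 20]"
  "Wtab ! 0 ! 3 ! Suc 0 ! Suc 0 = [0, 0, 0, 0, 0, 0, 60]"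
  "Wtab ! 0 ! 4 ! 0 ! 0 = [0, 0, 0, 0, 0, 0, 90]"
  "Wtab ! Suc 0 ! 0 ! 0 ! 0 = [0, 0, 6, 72, 1512, 26640, 514260]"
  "Wtab ! Suc 0 ! 0 ! 0 ! 2 = [0, 0, 0, 6, 252, 6360, 154620]"
  "Wtab ! Suc 0 ! 0 ! 0 ! 4 = [0, 0, 0, 0, 0, 180, 10080]"
  "Wtab ! Suc 0 ! 0 ! 0 ! 6 = [0, 0, 0, 0, 0, 0, 0]"
  "Wtab ! Suc 0 ! 0 ! 0 ! 8 = [0, 0, 0, 0, 0, 0, 0]"
  "Wtab ! Suc 0 ! 0 ! Suc 0 ! 0 = [0, 0, 0, 15, 384, 9390, 209280]"
  "Wtab ! Suc 0 ! 0 ! Suc 0 ! 2 = [0, 0, 0, 0, 12, 840, 29850]"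
  "Wtab ! Suc 0 ! 0 ! Suc 0 ! 4 = [0, 0, 0, 0, 0, 0, 480]"
  "Wtab ! Suc 0 ! 0 ! Suc 0 ! 6 = [0, 0, 0, 0, 0, 0, 0]"
  "Wtab ! Suc 0 ! 0 ! 2 ! 0 = [0, 0, 0, 0, 28, 1280, 42390]"
  "Wtab ! Suc 0 ! 0 ! 2 ! 2 = [0, 0, 0, 0, 0, 20, 2130]"
  "Wtab ! Suc 0 ! 0 ! 2 ! 4 = [0, 0, 0, 0, 0, 0, 0]"
  "Wtab ! Suc 0 ! 0 ! 3 ! 0 = [0, 0, 0, 0, 0, 45, 3240]"
  "Wtab ! Suc 0 ! 0 ! 3 ! 2 = [0, 0, 0, 0, 0, 0, 30]"
  "Wtab ! Suc 0 ! 0 ! 4 ! 0 = [0, 0, 0, 0, 0, 0, 66]"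
  "Wtab ! Suc 0 ! Suc 0 ! 0 ! Suc 0 = [0, 0, 0, 0, 48, 1960, 58680]"
  "Wtab ! Suc 0 ! Suc 0 ! 0 ! 3 = [0, 0, 0, 0, 0, 30, 3120]"
  "Wtab ! Suc 0 ! Suc 0 ! 0 ! 5 = [0, 0, 0, 0, 0, 0, 0]"
  "Wtab ! Suc 0 ! Suc 0 ! Suc 0 ! Suc 0 = [0, 0, 0, 0, 0, 110, 6930]"
  "Wtab ! Suc 0 ! Suc 0 ! Suc 0 ! 3 = [0, 0, 0, 0, 0, 0, 60]"
  "Wtab ! Suc 0 ! Suc 0 ! 2 ! Suc 0 = [0, 0, 0, 0, 0, 0, 210]"
  "Wtab ! Suc 0 ! 2 ! 0 ! 0 = [0, 0, 0, 0, 0, 180, 10080]"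
  "Wtab ! Suc 0 ! 2 ! 0 ! 2 = [0, 0, 0, 0, 0, 0, 300]"
  "Wtab ! Suc 0 ! 2 ! Suc 0 ! 0 = [0, 0, 0, 0, 0, 0, 480]"
  "Wtab ! 2 ! 0 ! 0 ! 0 = [0, 0, 0, 0, 90, 2880, 81720]"
  "Wtab ! 2 ! 0 ! 0 ! 2 = [0, 0, 0, 0, 0, 180, 10080]"
  "Wtab ! 2 ! 0 ! 0 ! 4 = [0, 0, 0, 0, 0, 0, 90]"
  "Wtab ! 2 ! 0 ! Suc 0 ! 0 = [0, 0, 0, 0, 0, 310, 14400]"
  "Wtab ! 2 ! 0 ! Suc 0 ! 2 = [0, 0, 0, 0, 0, 0, 480]"
  "Wtab ! 2 ! 0 ! 2 ! 0 = [0, 0, 0, 0, 0, 0, 795]"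
  "Wtab ! 2 ! Suc 0 ! 0 ! Suc 0 = [0, 0, 0, 0, 0, 0, 1200]"
  "Wtab ! 3 ! 0 ! 0 ! 0 = [0, 0, 0, 0, 0, 0, 1860]"
  by (simp_all add: Wtab_def)

definition hl :: "int list list" where "hl = [[(-2301198336), (-6298435584), (-6671130624), (-3531423744), (-989134848), (-139345920), (-7741440)], [(-5666070528), (-11339661312), (-9296308224), (-3989716992), (-943128576), (-116121600), (-5806080)], [(-3033262080), (-5144802048), (-3620313216), (-1351180800), (-281675520), (-31046400), (-1411200)], [(-444152448), (-672706368), (-423976960), (-142288320), (-26809600), (-2688000), (-112000)], [5111808, 7238912, 4266304, 1337248, 234728, 21840, 840], [2760000, 3608000, 1957400, 564320, 91216, 7840, 280]]"

definition R0 :: "v4 list" where "R0 = [(0, 0, 0, 0), (0, 0, 0, 2), (0, 0, 0, 4), (0, 0, 0, 6), (0, 0, 0, 8), (0, 0, 0, 10), (0, 0, 0, 12), (0, 0, 1, 1)]"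

definition R1 :: "v4 list" where "R1 = [(0, 0, 1, 3), (0, 0, 1, 5), (0, 0, 1, 7), (0, 0, 1, 9), (0, 0, 1, 11), (0, 0, 2, 2), (0, 0, 2, 4), (0, 0, 2, 6)]"

definition R2 :: "v4 list" where "R2 = [(0, 0, 2, 8), (0, 0, 2, 10), (0, 0, 3, 3), (0, 0, 3, 5), (0, 0, 3, 7), (0, 0, 3, 9), (0, 0, 4, 4), (0, 0, 4, 6)]"

definition R3 :: "v4 list" where "R3 = [(0, 0, 4, 8), (0, 0, 5, 5), (0, 0, 5, 7), (0, 0, 6, 6), (0, 1, 1, 2), (0, 1, 1, 4), (0, 1, 1, 6), (0, 1, 1, 8)]"

definition R4 :: "v4 list" where "R4 = [(0, 1, 1, 10), (0, 1, 2, 3), (0, 1, 2, 5), (0, 1, 2, 7), (0, 1, 2, 9), (0, 1, 3, 4), (0, 1, 3, 6), (0, 1, 3, 8)]"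

definition R5 :: "v4 list" where "R5 = [(0, 1, 4, 5), (0, 1, 4, 7), (0, 1, 5, 6), (0, 2, 2, 2), (0, 2, 2, 4), (0, 2, 2, 6), (0, 2, 2, 8), (0, 2, 3, 3)]"

definition R6 :: "v4 list" where "R6 = [(0, 2, 3, 5), (0, 2, 3, 7), (0, 2, 4, 4), (0, 2, 4, 6), (0, 2, 5, 5), (0, 3, 3, 4), (0, 3, 3, 6), (0, 3, 4, 5)]"

definition R7 :: "v4 list" where "R7 = [(0, 4, 4, 4), (1, 1, 1, 1), (1, 1, 1, 3), (1, 1, 1, 5), (1, 1, 1, 7), (1, 1, 1, 9), (1, 1, 2, 2), (1, 1, 2, 4)]"

definition R8 :: "v4 list" where "R8 = [(1, 1, 2, 6), (1, 1, 2, 8), (1, 1, 3, 3), (1, 1, 3, 5), (1, 1, 3, 7), (1, 1, 4, 4), (1, 1, 4, 6), (1, 1, 5, 5)]"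

definition R9 :: "v4 list" where "R9 = [(1, 2, 2, 3), (1, 2, 2, 5), (1, 2, 2, 7), (1, 2, 3, 4), (1, 2, 3, 6), (1, 2, 4, 5), (1, 3, 3, 3), (1, 3, 3, 5)]"

definition R10 :: "v4 list" where "R10 = [(1, 3, 4, 4), (2, 2, 2, 2), (2, 2, 2, 4), (2, 2, 2, 6), (2, 2, 3, 3), (2, 2, 3, 5), (2, 2, 4, 4), (2, 3, 3, 4)]"

definition R11 :: "v4 list" where "R11 = [(3, 3, 3, 3)]"

definition Reps :: "v4 list" where "Reps = R0 @ R1 @ R2 @ R3 @ R4 @ R5 @ R6 @ R7 @ R8 @ R9 @ R10 @ R11"

definition srt3 :: "int \<Rightarrow> int \<Rightarrow> int \<Rightarrow> int \<times> int \<times> int" where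
  "srt3 a b c = (min a (min b c), a + b + c - min a (min b c) - max a (max b c), max a (max b c))"

lemma srt3_c1: "srt3 a b c = srt3 b a c"
  unfolding srt3_def by (simp add: min.left_commute max.left_commute algebra_simps)
lemma srt3_c2: "srt3 a b c = srt3 a c b"
  unfolding srt3_def by (simp add: min.commute max.commute algebra_simps)

fun qsp :: "int \<Rightarrow> int \<times> int \<times> int \<Rightarrow> int poly" where
  "qsp x (b,c,e) = (if x \<noteq> 0 \<and> \<bar>x\<bar> + b + c + e \<le> 10 \<and> even (\<bar>x\<bar> + b + c + e)
     then smult (sgn x) (Poly (take 6 (qtab ! nat \<bar>x\<bar> ! nat b ! nat (c - b) ! nat (e - c)))) else 0)"

definition qp :: "int \<Rightarrow> int \<Rightarrow> int \<Rightarrow> int \<Rightarrow> int poly" where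
  "qp x y z w = qsp x (srt3 \<bar>y\<bar> \<bar>z\<bar> \<bar>w\<bar>)"

definition q :: "nat \<Rightarrow> int \<Rightarrow> int \<Rightarrow> int \<Rightarrow> int \<Rightarrow> int" where
  "q d x y z w = coeff (qp x y z w) d"

lemma q_c1: "q d x y z w = q d x z y w" unfolding q_def qp_def using srt3_c1 by metis
lemma q_c2: "q d x y z w = q d x y w z" unfolding q_def qp_def using srt3_c2 by metis
lemma q_n2: "q d x (- y) z w = q d x y z w" unfolding q_def qp_def by simp
lemma q_n3: "q d x y (- z) w = q d x y z w" unfolding q_def qp_def by simp
lemma q_n4: "q d x y z (- w) = q d x y z w" unfolding q_def qp_def by simp
lemma qsp_n1: "qsp (- x) T = - qsp x T" by (cases T) (auto simp: sgn_minus)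
lemma q_n1: "q d (- x) y z w = - q d x y z w" unfolding q_def qp_def by (simp add: qsp_n1)

lemma q_high: "6 \<le> d \<Longrightarrow> q d x y z w = 0"
proof -
  assume d: "6 \<le> d"
  have "coeff (qsp x T) d = 0" for T
  proof -
    obtain b c e where T: "T = (b,c,e)" by (cases T) auto
    have "coeff (Poly (take 6 xs)) d = 0" for xs :: "int list"
      using d by (simp add: nth_default_def)
    then show ?thesis unfolding T by simp
  qed
  then show ?thesis unfolding q_def qp_def by simp
qed

lemma srt3_sum: "fst (srt3 a b c) + fst (snd (srt3 a b c)) + snd (snd (srt3 a b c)) = a + b + c"
  by (simp add: srt3_def)

lemma qp_supp: "qp x y z w \<noteq> 0 \<Longrightarrow> \<bar>x\<bar> + \<bar>y\<bar> + \<bar>z\<bar> + \<bar>w\<bar> \<le> 10 \<and> even (x + y + z + w)"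
proof -
  assume H: "qp x y z w \<noteq> 0"
  obtain b c e where T: "srt3 \<bar>y\<bar> \<bar>z\<bar> \<bar>w\<bar> = (b,c,e)" by (cases "srt3 \<bar>y\<bar> \<bar>z\<bar> \<bar>w\<bar>") auto
  have s: "b + c + e = \<bar>y\<bar> + \<bar>z\<bar> + \<bar>w\<bar>" using srt3_sum[of "\<bar>y\<bar>" "\<bar>z\<bar>" "\<bar>w\<bar>"] T by simp
  from H have g: "\<bar>x\<bar> + b + c + e \<le> 10 \<and> even (\<bar>x\<bar> + b + c + e)"
    unfolding qp_def T by (auto split: if_splits)
  have p: "even (\<bar>x\<bar> + \<bar>y\<bar> + \<bar>z\<bar> + \<bar>w\<bar>) \<longleftrightarrow> even (x + y + z + w)"
    by simp
  have eq: "\<bar>x\<bar> + b + c + e = \<bar>x\<bar> + \<bar>y\<bar> + \<bar>z\<bar> + \<bar>w\<bar>" using s by linarith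
  show ?thesis using g p unfolding eq by blast
qed

lemma q_supp: "q d x y z w \<noteq> 0 \<Longrightarrow> \<bar>x\<bar> + \<bar>y\<bar> + \<bar>z\<bar> + \<bar>w\<bar> \<le> 10 \<and> even (x + y + z + w)"
  unfolding q_def by (rule qp_supp) auto

fun Qp :: "nat \<Rightarrow> v4 \<Rightarrow> int poly" where
  "Qp i (a,b,c,e) = (if i = 0 then qp a b c e else if i = 1 then qp b a c e
       else if i = 2 then qp c a b e else qp e a b c)"

lemma Qp_supp: "Qp i t \<noteq> 0 \<Longrightarrow> l1 t \<le> 10 \<and> even (psum t)"
  by (cases t) (auto split: if_splits dest!: qp_supp simp: algebra_simps)

definition Qd :: "nat \<Rightarrow> nat \<Rightarrow> v4 \<Rightarrow> int" where "Qd d i t = coeff (Qp i t) d"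

lemma Qd_supp: "Qd d i t \<noteq> 0 \<Longrightarrow> l1 t \<le> 10 \<and> even (psum t)"
  unfolding Qd_def by (rule Qp_supp[of i]) auto

definition Gp :: "v4 \<Rightarrow> v4 \<Rightarrow> int poly" where
  "Gp c t = (\<Sum>i<4. pCons 0 (smult (cp i c) (Qp i t)) + smult (cp i t) (Qp i t))"

definition G :: "nat \<Rightarrow> v4 \<Rightarrow> v4 \<Rightarrow> int" where "G d c t = coeff (Gp c t) d"

definition RHSp :: "v4 \<Rightarrow> int poly" where "RHSp u = (\<Sum>s\<in>SS. Gp s (u - s))"

definition RHSd :: "nat \<Rightarrow> v4 \<Rightarrow> int" where
  "RHSd d u = (\<Sum>s\<in>SS. G d s (u - s))"

lemma coeff_RHSp: "coeff (RHSp u) d = RHSd d u"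
  by (simp add: RHSp_def RHSd_def G_def coeff_sum)

definition h :: "nat \<Rightarrow> int poly" where "h j = Poly (hl ! j)"

definition hc :: "nat \<Rightarrow> nat \<Rightarrow> int" where "hc j d = coeff (h j) d"

definition LHSd :: "nat \<Rightarrow> v4 \<Rightarrow> int" where
  "LHSd d u = (\<Sum>j<6. hc j d * W (Suc j) u)"

definition LHSW :: "v4 \<Rightarrow> int poly" where
  "LHSW u = (\<Sum>j<6. smult (W (Suc j) u) (h j))"

lemma coeff_LHSW: "coeff (LHSW u) d = LHSd d u"
  by (simp add: LHSW_def LHSd_def hc_def coeff_sum mult.commute del: W.simps)

lemma sum4: fixes f :: "nat \<Rightarrow> 'a::comm_monoid_add" shows "(\<Sum>i<4. f i) = f 0 + f 1 + f 2 + f 3"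
  by (simp add: eval_nat_numeral)

lemma Gp_expand: "Gp (c0,c1,c2,c3) (a,b,c,e) =
   pCons 0 (smult c0 (qp a b c e) + smult c1 (qp b a c e) + smult c2 (qp c a b e) + smult c3 (qp e a b c))
     + (smult a (qp a b c e) + smult b (qp b a c e) + smult c (qp c a b e) + smult e (qp e a b c))"
  by (simp add: Gp_def sum4 algebra_simps)

lemma G_expand: "G d (c0,c1,c2,c3) (a,b,c,e) =
   (if d = 0 then 0 else c0 * q (d-1) a b c e + c1 * q (d-1) b a c e + c2 * q (d-1) c a b e + c3 * q (d-1) e a b c)
   + (a * q d a b c e + b * q d b a c e + c * q d c a b e + e * q d e a b c)"
  by (cases d) (simp_all add: G_def Gp_expand q_def coeff_pCons)

fun sw01 :: "v4 \<Rightarrow> v4" where "sw01 (a,b,c,d) = (b,a,c,d)"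
fun sw02 :: "v4 \<Rightarrow> v4" where "sw02 (a,b,c,d) = (c,b,a,d)"
fun sw12 :: "v4 \<Rightarrow> v4" where "sw12 (a,b,c,d) = (a,c,b,d)"
fun sw13 :: "v4 \<Rightarrow> v4" where "sw13 (a,b,c,d) = (a,d,c,b)"
fun sw23 :: "v4 \<Rightarrow> v4" where "sw23 (a,b,c,d) = (a,b,d,c)"
fun ng0 :: "v4 \<Rightarrow> v4" where "ng0 (a,b,c,d) = (-a,b,c,d)"
fun ng1 :: "v4 \<Rightarrow> v4" where "ng1 (a,b,c,d) = (a,-b,c,d)"
fun ng2 :: "v4 \<Rightarrow> v4" where "ng2 (a,b,c,d) = (a,b,-c,d)"
fun ng3 :: "v4 \<Rightarrow> v4" where "ng3 (a,b,c,d) = (a,b,c,-d)"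

definition gens :: "(v4 \<Rightarrow> v4) set" where
  "gens = {sw01, sw02, sw12, sw13, sw23, ng0, ng1, ng2, ng3}"

lemma gens_add: "g \<in> gens \<Longrightarrow> g (x - y) = g x - g y"
  by (cases x; cases y) (auto simp: gens_def)

lemma gens_invol: "g \<in> gens \<Longrightarrow> g (g x) = x"
  by (cases x) (auto simp: gens_def)

lemma gens_inj: "g \<in> gens \<Longrightarrow> inj g"
  by (metis gens_invol injI)

lemma gens_SS_sub: "g \<in> gens \<Longrightarrow> g ` SS \<subseteq> SS"
  unfolding gens_def SS_def by (auto simp: steps_def)

lemma gens_SS: "g \<in> gens \<Longrightarrow> g ` SS = SS"
  by (rule endo_inj_surj[OF finite_SS gens_SS_sub inj_on_subset[OF gens_inj]]) auto

lemma gens_G: "g \<in> gens \<Longrightarrow> G d (g c) (g t) = G d c t"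
proof -
  assume g: "g \<in> gens"
  obtain c0 c1 c2 c3 where c: "c = (c0,c1,c2,c3)" by (cases c) auto
  obtain a b e f where t: "t = (a,b,e,f)" by (cases t) auto
  show ?thesis using g unfolding gens_def c t
    by (auto simp: G_expand q_n1 q_n2 q_n3 q_n4 algebra_simps q_c1 q_c2)
qed

lemma W_gens: "g \<in> gens \<Longrightarrow> W k (g u) = W k u"
  by (rule W_inv[OF gens_add gens_inj gens_SS])

lemma RHSd_gens: "g \<in> gens \<Longrightarrow> RHSd d (g u) = RHSd d u"
proof -
  assume g: "g \<in> gens"
  have "RHSd d (g u) = (\<Sum>s\<in>g ` SS. G d s (g u - s))" unfolding RHSd_def using gens_SS[OF g] by simp
  also have "\<dots> = (\<Sum>s\<in>SS. G d (g s) (g u - g s))"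
    by (subst sum.reindex) (auto intro: inj_on_subset[OF gens_inj[OF g]])
  also have "\<dots> = (\<Sum>s\<in>SS. G d s (u - s))"
    by (simp add: gens_add[OF g, symmetric] gens_G[OF g])
  finally show ?thesis unfolding RHSd_def .
qed

lemma LHSd_gens: "g \<in> gens \<Longrightarrow> LHSd d (g u) = LHSd d u"
  by (simp add: LHSd_def W_gens del: W.simps)

fun abs4 :: "v4 \<Rightarrow> v4" where "abs4 (a,b,c,d) = (\<bar>a\<bar>,\<bar>b\<bar>,\<bar>c\<bar>,\<bar>d\<bar>)"
fun cs01 :: "v4 \<Rightarrow> v4" where "cs01 (a,b,c,d) = (min a b, max a b, c, d)"
fun cs23 :: "v4 \<Rightarrow> v4" where "cs23 (a,b,c,d) = (a, b, min c d, max c d)"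
fun cs02 :: "v4 \<Rightarrow> v4" where "cs02 (a,b,c,d) = (min a c, b, max a c, d)"
fun cs13 :: "v4 \<Rightarrow> v4" where "cs13 (a,b,c,d) = (a, min b d, c, max b d)"
fun cs12 :: "v4 \<Rightarrow> v4" where "cs12 (a,b,c,d) = (a, min b c, max b c, d)"

definition canon :: "v4 \<Rightarrow> v4" where
  "canon u = cs12 (cs13 (cs02 (cs23 (cs01 (abs4 u)))))"

lemma inv_canon:
  assumes inv: "\<And>g u. g \<in> gens \<Longrightarrow> f (g u) = f u"
  shows "f (canon u) = f u"
proof -
  have s01: "f (sw01 u) = f u" and s02: "f (sw02 u) = f u" and s12: "f (sw12 u) = f u"
    and s13: "f (sw13 u) = f u" and s23: "f (sw23 u) = f u"
    and n0: "f (ng0 u) = f u" and n1: "f (ng1 u) = f u" and n2: "f (ng2 u) = f u" and n3: "f (ng3 u) = f u"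
    for u using inv by (auto simp: gens_def)
  have c01: "f (cs01 u) = f u" for u using s01[of u] by (cases u) (auto simp: min_def max_def)
  have c02: "f (cs02 u) = f u" for u using s02[of u] by (cases u) (auto simp: min_def max_def)
  have c12: "f (cs12 u) = f u" for u using s12[of u] by (cases u) (auto simp: min_def max_def)
  have c13: "f (cs13 u) = f u" for u using s13[of u] by (cases u) (auto simp: min_def max_def)
  have c23: "f (cs23 u) = f u" for u using s23[of u] by (cases u) (auto simp: min_def max_def)
  have a: "f (abs4 u) = f u" for u
  proof -
    obtain a b c d where u: "u = (a,b,c,d)" by (cases u) auto
    have 1: "f (\<bar>a\<bar>,b,c,d) = f (a,b,c,d)" using n0[of "(a,b,c,d)"] by (cases "a \<ge> 0") auto
    have 2: "f (\<bar>a\<bar>,\<bar>b\<bar>,c,d) = f (\<bar>a\<bar>,b,c,d)" using n1[of "(\<bar>a\<bar>,b,c,d)"] by (cases "b \<ge> 0") auto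
    have 3: "f (\<bar>a\<bar>,\<bar>b\<bar>,\<bar>c\<bar>,d) = f (\<bar>a\<bar>,\<bar>b\<bar>,c,d)" using n2[of "(\<bar>a\<bar>,\<bar>b\<bar>,c,d)"] by (cases "c \<ge> 0") auto
    have 4: "f (\<bar>a\<bar>,\<bar>b\<bar>,\<bar>c\<bar>,\<bar>d\<bar>) = f (\<bar>a\<bar>,\<bar>b\<bar>,\<bar>c\<bar>,d)" using n3[of "(\<bar>a\<bar>,\<bar>b\<bar>,\<bar>c\<bar>,d)"] by (cases "d \<ge> 0") auto
    show ?thesis using 1 2 3 4 u by simp
  qed
  show ?thesis unfolding canon_def using c01 c02 c12 c13 c23 a by simp
qed

lemma net_props:
  fixes x y z w :: int
  assumes "cs12 (cs13 (cs02 (cs23 (cs01 (x,y,z,w))))) = (a,b,c,d)"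
  shows "a \<le> b \<and> b \<le> c \<and> c \<le> d \<and> a + b + c + d = x + y + z + w \<and> min (min x y) (min z w) = a"
proof -
  define m1 where "m1 = min x y"
  define M1 where "M1 = max x y"
  define m2 where "m2 = min z w"
  define M2 where "M2 = max z w"
  have "cs12 (cs13 (cs02 (cs23 (cs01 (x,y,z,w))))) =
      (min m1 m2, min (min M1 M2) (max m1 m2), max (min M1 M2) (max m1 m2), max M1 M2)"
    by (simp only: cs01.simps cs23.simps cs02.simps cs13.simps cs12.simps m1_def M1_def m2_def M2_def)
  then have e: "a = min m1 m2" "b = min (min M1 M2) (max m1 m2)" "c = max (min M1 M2) (max m1 m2)" "d = max M1 M2"
    using assms by simp_all
  have s1: "m1 + M1 = x + y" "m2 + M2 = z + w" "m1 \<le> M1" "m2 \<le> M2"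
    by (auto simp: m1_def M1_def m2_def M2_def min_def max_def)
  have s2: "min m1 m2 + max m1 m2 = m1 + m2" "min M1 M2 + max M1 M2 = M1 + M2"
    "min (min M1 M2) (max m1 m2) + max (min M1 M2) (max m1 m2) = min M1 M2 + max m1 m2"
    by (auto simp: min_def max_def)
  have o1: "min m1 m2 \<le> min (min M1 M2) (max m1 m2)" using s1 by (simp add: min_def max_def)
  have o2: "min (min M1 M2) (max m1 m2) \<le> max (min M1 M2) (max m1 m2)" by (simp add: min_def max_def)
  have o3: "max (min M1 M2) (max m1 m2) \<le> max M1 M2" using s1 by (simp add: min_def max_def)
  have o4: "min (min x y) (min z w) = min m1 m2" by (simp add: m1_def m2_def)
  show ?thesis unfolding e using s1 s2 o1 o2 o3 o4 by (intro conjI) linarith+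
qed

lemma canon_props:
  assumes "canon u = (a,b,c,d)"
  shows "0 \<le> a \<and> a \<le> b \<and> b \<le> c \<and> c \<le> d \<and> a + b + c + d = l1 u \<and> (even (a + b + c + d) \<longleftrightarrow> even (psum u))"
proof -
  obtain x y z w where u: "u = (x,y,z,w)" by (cases u) auto
  have p: "even (\<bar>x\<bar> + \<bar>y\<bar> + \<bar>z\<bar> + \<bar>w\<bar>) \<longleftrightarrow> even (x + y + z + w)" by simp
  have n: "cs12 (cs13 (cs02 (cs23 (cs01 (\<bar>x\<bar>,\<bar>y\<bar>,\<bar>z\<bar>,\<bar>w\<bar>))))) = (a,b,c,d)"
    using assms unfolding canon_def u by simp
  from net_props[OF n] have "a \<le> b \<and> b \<le> c \<and> c \<le> d \<and> a + b + c + d = \<bar>x\<bar> + \<bar>y\<bar> + \<bar>z\<bar> + \<bar>w\<bar>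
     \<and> min (min \<bar>x\<bar> \<bar>y\<bar>) (min \<bar>z\<bar> \<bar>w\<bar>) = a" .
  moreover have "0 \<le> min (min \<bar>x\<bar> \<bar>y\<bar>) (min \<bar>z\<bar> \<bar>w\<bar>)" by simp
  ultimately show ?thesis using p unfolding u by (simp only: l1.simps psum.simps)
qed

definition RepsG :: "v4 list" where
  "RepsG = [(a,b,c,d). a \<leftarrow> [0..3], b \<leftarrow> [a..4], c \<leftarrow> [b..6], d \<leftarrow> [c..12], a + b + c + d \<le> 12 \<and> even (a + b + c + d)]"

lemma RepsG_eq: "RepsG = Reps"
  unfolding RepsG_def Reps_def by code_simp

lemma Reps_mem:
  assumes "0 \<le> a" "a \<le> b" "b \<le> c" "c \<le> d" "a + b + c + d \<le> 12" "even (a + b + c + d)"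
  shows "(a,b,c,d) \<in> set Reps"
  unfolding RepsG_eq[symmetric] RepsG_def using assms by auto

fun Wt :: "nat \<Rightarrow> v4 \<Rightarrow> int" where
  "Wt k (a,b,c,d) = (if 0 \<le> a \<and> a \<le> b \<and> b \<le> c \<and> c \<le> d \<and> a + b + c + d \<le> 12 \<and> even (a + b + c + d) \<and> k \<le> 6
     then Wtab ! nat a ! nat (b - a) ! nat (c - b) ! nat (d - c) ! k else 0)"

definition Wf :: "nat \<Rightarrow> v4 \<Rightarrow> int" where "Wf k v = Wt k (canon v)"

lemma Wf_out: "\<not> (l1 v \<le> 12 \<and> even (psum v)) \<Longrightarrow> Wf k v = 0"
proof -
  assume H: "\<not> (l1 v \<le> 12 \<and> even (psum v))"
  obtain a b c d where cv: "canon v = (a,b,c,d)" by (cases "canon v") auto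
  have cp: "a + b + c + d = l1 v" "even (a + b + c + d) \<longleftrightarrow> even (psum v)"
    using canon_props[OF cv] by blast+
  have g: "\<not> (a + b + c + d \<le> 12 \<and> even (a + b + c + d))" using cp H by metis
  have ng: "\<not> (0 \<le> a \<and> a \<le> b \<and> b \<le> c \<and> c \<le> d \<and> a + b + c + d \<le> 12 \<and> even (a + b + c + d) \<and> k \<le> 6)"
    using g by blast
  show ?thesis unfolding Wf_def cv Wt.simps using ng by (rule if_not_P)
qed

lemma canon_in_Reps: "l1 v \<le> 12 \<Longrightarrow> even (psum v) \<Longrightarrow> canon v \<in> set Reps"
proof -
  assume "l1 v \<le> 12" "even (psum v)"
  obtain a b c d where cv: "canon v = (a,b,c,d)" by (cases "canon v") auto
  have cp: "a + b + c + d = l1 v" "even (a + b + c + d) \<longleftrightarrow> even (psum v)"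
    "0 \<le> a" "a \<le> b" "b \<le> c" "c \<le> d"
    using canon_props[OF cv] by blast+
  have "a + b + c + d \<le> 12" "even (a + b + c + d)" using cp \<open>l1 v \<le> 12\<close> \<open>even (psum v)\<close> by metis+
  then show ?thesis unfolding cv using cp by (intro Reps_mem) auto
qed

lemma W_of_rep:
  assumes rep: "\<forall>c\<in>set Reps. W k c = Wt k c" and k: "k \<le> 6"
  shows "W k v = Wf k v"
proof (cases "l1 v \<le> 12 \<and> even (psum v)")
  case True
  have "W k v = W k (canon v)" by (rule inv_canon[symmetric]) (rule W_gens)
  also have "\<dots> = Wt k (canon v)" using rep canon_in_Reps True by auto
  finally show ?thesis unfolding Wf_def .
next
  case False
  then have "W k v = 0" using k by (intro W_zero) auto
  then show ?thesis using Wf_out[OF False] by simp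
qed

lemma W0_check: "\<forall>c\<in>set Reps. W 0 c = Wt 0 c"
  by (simp add: Reps_def R0_def R1_def R2_def R3_def R4_def R5_def R6_def R7_def R8_def R9_def R10_def R11_def wkeys zero_prod_def)

lemma Wstep_check0: "\<forall>c\<in>set Reps. (\<Sum>s\<in>SS. Wf 0 (c - s)) = Wt (Suc 0) c"
  by (simp add: Reps_def R0_def R1_def R2_def R3_def R4_def R5_def R6_def R7_def R8_def R9_def R10_def R11_def sum_SS steps_def Wf_def canon_def wkeys zero_prod_def)


lemma Wstep_check1: "\<forall>c\<in>set Reps. (\<Sum>s\<in>SS. Wf 1 (c - s)) = Wt (Suc 1) c"
  by (simp add: Reps_def R0_def R1_def R2_def R3_def R4_def R5_def R6_def R7_def R8_def R9_def R10_def R11_def sum_SS steps_def Wf_def canon_def wkeys zero_prod_def)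


lemma Wstep_check2: "\<forall>c\<in>set Reps. (\<Sum>s\<in>SS. Wf 2 (c - s)) = Wt (Suc 2) c"
  by (simp add: Reps_def R0_def R1_def R2_def R3_def R4_def R5_def R6_def R7_def R8_def R9_def R10_def R11_def sum_SS steps_def Wf_def canon_def wkeys zero_prod_def)


lemma Wstep_check3: "\<forall>c\<in>set Reps. (\<Sum>s\<in>SS. Wf 3 (c - s)) = Wt (Suc 3) c"
  by (simp add: Reps_def R0_def R1_def R2_def R3_def R4_def R5_def R6_def R7_def R8_def R9_def R10_def R11_def sum_SS steps_def Wf_def canon_def wkeys zero_prod_def)


lemma Wstep_check4: "\<forall>c\<in>set Reps. (\<Sum>s\<in>SS. Wf 4 (c - s)) = Wt (Suc 4) c"
  by (simp add: Reps_def R0_def R1_def R2_def R3_def R4_def R5_def R6_def R7_def R8_def R9_def R10_def R11_def sum_SS steps_def Wf_def canon_def wkeys zero_prod_def)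


lemma Wstep_check5: "\<forall>c\<in>set Reps. (\<Sum>s\<in>SS. Wf 5 (c - s)) = Wt (Suc 5) c"
  by (simp add: Reps_def R0_def R1_def R2_def R3_def R4_def R5_def R6_def R7_def R8_def R9_def R10_def R11_def sum_SS steps_def Wf_def canon_def wkeys zero_prod_def)

lemma Wstep_check: "k < 6 \<Longrightarrow> \<forall>c\<in>set Reps. (\<Sum>s\<in>SS. Wf k (c - s)) = Wt (Suc k) c"
proof -
  assume "k < 6"
  then have "k = 0 \<or> k = 1 \<or> k = 2 \<or> k = 3 \<or> k = 4 \<or> k = 5" by arith
  then show ?thesis using Wstep_check0 Wstep_check1 Wstep_check2 Wstep_check3 Wstep_check4 Wstep_check5
    by (elim disjE) simp_all
qed

lemma W_rep: "k \<le> 6 \<Longrightarrow> \<forall>c\<in>set Reps. W k c = Wt k c"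
proof (induction k)
  case 0 then show ?case using W0_check by simp
next
  case (Suc k)
  then have r: "\<forall>c\<in>set Reps. W k c = Wt k c" by simp
  have IH: "W k v = Wf k v" for v using W_of_rep[OF r] Suc.prems by simp
  show ?case using Wstep_check[of k] Suc.prems by (simp add: IH)
qed

lemma W_tab: "k \<le> 6 \<Longrightarrow> W k v = Wf k v"
  using W_of_rep W_rep by blast

definition LHSt :: "nat \<Rightarrow> v4 \<Rightarrow> int" where
  "LHSt d u = (\<Sum>j<6. hc j d * Wf (Suc j) u)"

lemma LHSd_LHSt: "LHSd d u = LHSt d u"
  unfolding LHSd_def LHSt_def by (rule sum.cong) (auto simp: W_tab simp del: W.simps)

definition LHSp :: "v4 \<Rightarrow> int poly" where
  "LHSp u = (\<Sum>j<6. smult (Wf (Suc j) u) (h j))"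

lemma sum6: fixes f :: "nat \<Rightarrow> 'a::comm_monoid_add" shows "(\<Sum>j<6. f j) = f 0 + f 1 + f 2 + f 3 + f 4 + f 5"
  by (simp add: eval_nat_numeral)

lemma poly_check0: "\<forall>c\<in>set R0. LHSp c = RHSp c"
  by (simp add: R0_def LHSp_def sum6 h_def hl_def Wf_def canon_def wkeys zero_prod_def
     RHSp_def sum_SS steps_def Gp_expand qp_def srt3_def qkeys)


lemma poly_check1: "\<forall>c\<in>set R1. LHSp c = RHSp c"
  by (simp add: R1_def LHSp_def sum6 h_def hl_def Wf_def canon_def wkeys zero_prod_def
     RHSp_def sum_SS steps_def Gp_expand qp_def srt3_def qkeys)


lemma poly_check2: "\<forall>c\<in>set R2. LHSp c = RHSp c"
  by (simp add: R2_def LHSp_def sum6 h_def hl_def Wf_def canon_def wkeys zero_prod_def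
     RHSp_def sum_SS steps_def Gp_expand qp_def srt3_def qkeys)


lemma poly_check3: "\<forall>c\<in>set R3. LHSp c = RHSp c"
  by (simp add: R3_def LHSp_def sum6 h_def hl_def Wf_def canon_def wkeys zero_prod_def
     RHSp_def sum_SS steps_def Gp_expand qp_def srt3_def qkeys)


lemma poly_check4: "\<forall>c\<in>set R4. LHSp c = RHSp c"
  by (simp add: R4_def LHSp_def sum6 h_def hl_def Wf_def canon_def wkeys zero_prod_def
     RHSp_def sum_SS steps_def Gp_expand qp_def srt3_def qkeys)


lemma poly_check5: "\<forall>c\<in>set R5. LHSp c = RHSp c"
  by (simp add: R5_def LHSp_def sum6 h_def hl_def Wf_def canon_def wkeys zero_prod_def
     RHSp_def sum_SS steps_def Gp_expand qp_def srt3_def qkeys)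


lemma poly_check6: "\<forall>c\<in>set R6. LHSp c = RHSp c"
  by (simp add: R6_def LHSp_def sum6 h_def hl_def Wf_def canon_def wkeys zero_prod_def
     RHSp_def sum_SS steps_def Gp_expand qp_def srt3_def qkeys)


lemma poly_check7: "\<forall>c\<in>set R7. LHSp c = RHSp c"
  by (simp add: R7_def LHSp_def sum6 h_def hl_def Wf_def canon_def wkeys zero_prod_def
     RHSp_def sum_SS steps_def Gp_expand qp_def srt3_def qkeys)


lemma poly_check8: "\<forall>c\<in>set R8. LHSp c = RHSp c"
  by (simp add: R8_def LHSp_def sum6 h_def hl_def Wf_def canon_def wkeys zero_prod_def
     RHSp_def sum_SS steps_def Gp_expand qp_def srt3_def qkeys)


lemma poly_check9: "\<forall>c\<in>set R9. LHSp c = RHSp c"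
  by (simp add: R9_def LHSp_def sum6 h_def hl_def Wf_def canon_def wkeys zero_prod_def
     RHSp_def sum_SS steps_def Gp_expand qp_def srt3_def qkeys)


lemma poly_check10: "\<forall>c\<in>set R10. LHSp c = RHSp c"
  by (simp add: R10_def LHSp_def sum6 h_def hl_def Wf_def canon_def wkeys zero_prod_def
     RHSp_def sum_SS steps_def Gp_expand qp_def srt3_def qkeys)


lemma poly_check11: "\<forall>c\<in>set R11. LHSp c = RHSp c"
  by (simp add: R11_def LHSp_def sum6 h_def hl_def Wf_def canon_def wkeys zero_prod_def
     RHSp_def sum_SS steps_def Gp_expand qp_def srt3_def qkeys)

lemma poly_check: "\<forall>c\<in>set Reps. LHSp c = RHSp c"
  using poly_check0 poly_check1 poly_check2 poly_check3 poly_check4 poly_check5 poly_check6 poly_check7 poly_check8 poly_check9 poly_check10 poly_check11 unfolding Reps_def set_append Un_iff by blast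

lemma id_check: "\<forall>c\<in>set Reps. LHSt d c = RHSd d c"
proof
  fix c assume "c \<in> set Reps"
  then have "coeff (LHSp c) d = coeff (RHSp c) d" using poly_check by simp
  then show "LHSt d c = RHSd d c"
    by (simp add: LHSp_def LHSt_def coeff_RHSp coeff_sum hc_def mult.commute)
qed

lemma RHSd_out: "\<not> (l1 u \<le> 12 \<and> even (psum u)) \<Longrightarrow> RHSd d u = 0"
proof -
  assume H: "\<not> (l1 u \<le> 12 \<and> even (psum u))"
  have "Qp i (u - s) = 0" if "s \<in> SS" for i s
  proof (rule ccontr)
    assume "Qp i (u - s) \<noteq> 0"
    from Qp_supp[OF this] have h: "l1 (u - s) \<le> 10" "even (psum (u - s))" by auto
    have "l1 u \<le> l1 (u - s) + l1 s" using l1_add[of "u - s" s] by simp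
    moreover have "psum u = psum (u - s) + psum s" using psum_add[of "u - s" s] by simp
    ultimately show False using h H SS_props[OF that] by auto
  qed
  then have "Gp s (u - s) = 0" if "s \<in> SS" for s using that unfolding Gp_def by simp
  then show ?thesis unfolding RHSd_def G_def by (auto intro!: sum.neutral)
qed

lemma pointwise: "LHSd d u = RHSd d u"
proof (cases "l1 u \<le> 12 \<and> even (psum u)")
  case True
  have "LHSd d u = LHSd d (canon u)" by (rule inv_canon[symmetric]) (rule LHSd_gens)
  also have "\<dots> = LHSt d (canon u)" by (rule LHSd_LHSt)
  also have "\<dots> = RHSd d (canon u)" using id_check canon_in_Reps True by auto
  also have "\<dots> = RHSd d u" by (rule inv_canon) (rule RHSd_gens)
  finally show ?thesis .
next
  case False
  then have "LHSd d u = 0" unfolding LHSd_def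
    by (intro sum.neutral ballI) (simp add: W_zero del: W.simps)
  then show ?thesis using RHSd_out[OF False] by simp
qed

lemma LHSW_RHSp: "LHSW u = RHSp u"
  by (rule poly_eqI) (simp add: coeff_LHSW coeff_RHSp pointwise)

lemma sum_le5: fixes f :: "nat \<Rightarrow> 'a::comm_monoid_add"
  shows "(\<Sum>j\<le>5. f j) = f 0 + f 1 + f 2 + f 3 + f 4 + f 5"
  by (simp add: eval_nat_numeral add.assoc)

lemma sum_lt6: fixes f :: "nat \<Rightarrow> 'a::comm_monoid_add"
  shows "(\<Sum>j<6. f j) = (\<Sum>j\<le>5. f j)"
  by (simp add: sum_le5 eval_nat_numeral add.assoc)

lemma deg_h: "j \<le> 5 \<Longrightarrow> degree (h j) = 6"
proof -
  assume "j \<le> 5"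
  then have "j = 0 \<or> j = 1 \<or> j = 2 \<or> j = 3 \<or> j = 4 \<or> j = 5" by arith
  then show ?thesis by (elim disjE) (simp_all add: h_def hl_def)
qed

lemma rec_int: "(\<Sum>j\<le>5. poly (h j) (int n) * int (r24 (n + j))) = 0"
proof (cases n)
  case 0
  have r: "int (r24 j) = Wf j 0" if "j \<le> 6" for j using r24_W W_tab that by simp
  show ?thesis using 0 r
    by (simp add: sum_le5 h_def hl_def Wf_def canon_def wkeys zero_prod_def poly_0_coeff_0)
next
  case (Suc m)
  let ?n = "int n"
  have ck: "int (r24 (n + j)) = (\<Sum>u\<in>Bx 12. W (Suc j) u * W m (- u))" if "j \<le> 5" for j
  proof -
    have "int (r24 (n + j)) = W (Suc j + m) 0" using r24_W Suc by (simp add: add.commute)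
    also have "\<dots> = (\<Sum>u\<in>Bx 12. W (Suc j) u * W m (0 - u))" using that by (intro CK) simp
    finally show ?thesis by simp
  qed
  have "(\<Sum>j\<le>5. poly (h j) ?n * int (r24 (n + j)))
      = (\<Sum>j\<le>5. poly (h j) ?n * (\<Sum>u\<in>Bx 12. W (Suc j) u * W m (- u)))"
    using ck by (intro sum.cong) auto
  also have "\<dots> = (\<Sum>j\<le>5. \<Sum>u\<in>Bx 12. poly (h j) ?n * W (Suc j) u * W m (- u))"
    by (simp add: sum_distrib_left mult.assoc del: W.simps)
  also have "\<dots> = (\<Sum>u\<in>Bx 12. \<Sum>j\<le>5. poly (h j) ?n * W (Suc j) u * W m (- u))"
    by (rule sum.swap)
  also have "\<dots> = (\<Sum>u\<in>Bx 12. (\<Sum>j\<le>5. poly (h j) ?n * W (Suc j) u) * W m (- u))"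
    by (simp add: sum_distrib_right del: W.simps)
  also have "\<dots> = (\<Sum>u\<in>Bx 12. poly (RHSp u) ?n * W m (- u))"
  proof (rule sum.cong[OF refl])
    fix u
    have "(\<Sum>j\<le>5. poly (h j) ?n * W (Suc j) u) = poly (LHSW u) ?n"
      by (simp add: LHSW_def poly_sum sum_lt6 mult.commute del: W.simps)
    then show "(\<Sum>j\<le>5. poly (h j) ?n * W (Suc j) u) * W m (- u) = poly (RHSp u) ?n * W m (- u)"
      by (simp add: LHSW_RHSp del: W.simps)
  qed
  also have "\<dots> = (\<Sum>u\<in>Bx 12. (\<Sum>s\<in>SS. \<Sum>i<4. (int (Suc m) * cp i s + cp i (u - s)) * poly (Qp i (u - s)) (int (Suc m))) * W m (- u))"
    by (simp add: RHSp_def Gp_def poly_sum Suc algebra_simps del: W.simps)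
  also have "\<dots> = 0"
  proof (rule cert_zero)
    fix i t assume "poly (Qp i t) (int (Suc m)) \<noteq> 0"
    then have "Qp i t \<noteq> 0" by auto
    from Qp_supp[OF this] show "t \<in> Bx 10" using l1_Bx by auto
  qed
  finally show ?thesis .
qed

definition gq :: "rat poly" where "gq = [:120, 274, 225, 85, 15, 1:]"

lemma poly_gq: "poly gq x = (x + 1) * (x + 2) * (x + 3) * (x + 4) * (x + 5)"
  by (simp add: gq_def algebra_simps)

definition hr :: "nat \<Rightarrow> rat poly" where "hr j = map_poly of_int (h j)"

lemma poly_map_of_int: "poly (map_poly (of_int :: int \<Rightarrow> rat) p) (of_int x) = of_int (poly p x)"
  by (induction p) (auto simp: map_poly_pCons)

lemma poly_hr: "poly (hr j) (of_nat n) = of_int (poly (h j) (int n))"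
  using poly_map_of_int[of "h j" "int n"] by (simp add: hr_def)

lemma degree_hr: "degree (hr j) = degree (h j)"
  unfolding hr_def by (rule degree_map_poly) simp

lemma coeff_hr: "coeff (hr j) d = of_int (coeff (h j) d)"
  unfolding hr_def by (simp add: coeff_map_poly)

definition P :: "nat \<Rightarrow> rat poly" where
  "P i = pcompose (gq * hr (5 - i)) [:of_nat i - 5, 1:]"

lemma poly_P: "poly (P i) x = poly gq (x + of_nat i - 5) * poly (hr (5 - i)) (x + of_nat i - 5)"
  by (simp add: P_def poly_pcompose algebra_simps)

lemma degree_gq: "degree gq = 5" by (simp add: gq_def)

lemma degree_P: "i \<le> 5 \<Longrightarrow> degree (P i) \<le> 11"
proof -
  assume i: "i \<le> 5"
  have "degree (P i) = degree (gq * hr (5 - i))" by (simp add: P_def degree_pcompose)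
  also have "\<dots> \<le> degree gq + degree (hr (5 - i))" by (rule degree_mult_le)
  also have "\<dots> = 11" using deg_h[of "5 - i"] by (simp add: degree_gq degree_hr)
  finally show ?thesis .
qed

lemma coeff_P5: "coeff (P 5) 11 \<noteq> 0"
proof -
  have "P 5 = gq * hr 0" by (simp add: P_def)
  moreover have "coeff (gq * hr 0) (degree gq + degree (hr 0)) = coeff gq (degree gq) * coeff (hr 0) (degree (hr 0))"
    by (rule coeff_mult_degree_sum)
  moreover have "degree (hr 0) = 6" using deg_h[of 0] by (simp add: degree_hr)
  moreover have "degree gq + degree (hr 0) = 11" using deg_h[of 0] by (simp add: degree_gq degree_hr)
  moreover have "coeff gq 5 * coeff (hr 0) 6 \<noteq> 0" by (simp add: gq_def coeff_hr h_def hl_def numeral_eq_Suc)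
  ultimately show ?thesis by simp
qed

definition u :: "nat \<Rightarrow> rat poly" where "u k = (\<Sum>i\<le>5. monom (coeff (P i) k) i)"

lemma coeff_u: "coeff (u k) i = (if i \<le> 5 then coeff (P i) k else 0)"
  by (simp add: u_def coeff_sum coeff_monom)

lemma degree_u: "degree (u k) \<le> 5"
  by (rule degree_le) (simp add: coeff_u)

lemma u11: "u 11 \<noteq> 0" "degree (u 11) = 5"
proof -
  have c: "coeff (u 11) 5 \<noteq> 0" using coeff_P5 by (simp add: coeff_u)
  then show "u 11 \<noteq> 0" by auto
  from c have "5 \<le> degree (u 11)" by (rule le_degree)
  then show "degree (u 11) = 5" using degree_u[of 11] by simp
qed

lemma theta_nth: "theta F $ m = of_nat m * F $ m"
  by (cases m) (simp_all add: theta_def)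

lemma theta_pow: "(theta ^^ k) R24 $ m = of_nat m ^ k * of_nat (r24 m)"
  by (induction k) (simp_all add: theta_nth R24_def)

lemma poly_sum11: fixes p :: "rat poly" shows "degree p \<le> 11 \<Longrightarrow> poly p x = (\<Sum>k\<le>11. coeff p k * x ^ k)"
proof -
  assume d: "degree p \<le> 11"
  have "poly p x = (\<Sum>k\<le>degree p. coeff p k * x ^ k)" by (rule poly_altdef)
  also have "\<dots> = (\<Sum>k\<le>11. coeff p k * x ^ k)"
    by (rule sum.mono_neutral_left) (auto simp: d coeff_eq_0)
  finally show ?thesis .
qed

lemma ode_coeff: "(\<Sum>k\<le>11. fps_of_poly (u k) * (theta ^^ k) R24) $ m = 0"
proof -
  let ?r = "\<lambda>j. (of_nat (r24 j) :: rat)"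
  have "(\<Sum>k\<le>11. fps_of_poly (u k) * (theta ^^ k) R24) $ m
      = (\<Sum>k\<le>11. \<Sum>i=0..m. coeff (u k) i * (of_nat (m - i) ^ k * ?r (m - i)))"
    by (simp add: fps_sum_nth fps_mult_nth theta_pow)
  also have "\<dots> = (\<Sum>i=0..m. (\<Sum>k\<le>11. coeff (u k) i * of_nat (m - i) ^ k) * ?r (m - i))"
    by (subst sum.swap) (simp add: sum_distrib_right mult.assoc)
  also have "\<dots> = (\<Sum>i=0..m. if i \<le> 5 then poly gq (of_nat m - 5) * (poly (hr (5 - i)) (of_nat m - 5) * ?r (m - i)) else 0)"
  proof (rule sum.cong[OF refl])
    fix i assume i: "i \<in> {0..m}"
    show "(\<Sum>k\<le>11. coeff (u k) i * of_nat (m - i) ^ k) * ?r (m - i)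
       = (if i \<le> 5 then poly gq (of_nat m - 5) * (poly (hr (5 - i)) (of_nat m - 5) * ?r (m - i)) else 0)"
    proof (cases "i \<le> 5")
      case True
      have "(\<Sum>k\<le>11. coeff (u k) i * of_nat (m - i) ^ k) = poly (P i) (of_nat (m - i))"
        using True poly_sum11[OF degree_P[OF True]] by (simp add: coeff_u)
      also have "\<dots> = poly gq (of_nat m - 5) * poly (hr (5 - i)) (of_nat m - 5)"
        using i by (simp add: poly_P of_nat_diff)
      finally show ?thesis using True by simp
    next
      case False
      then show ?thesis by (simp add: coeff_u)
    qed
  qed
  also have "\<dots> = poly gq (of_nat m - 5) * (\<Sum>i=0..m. if i \<le> 5 then poly (hr (5 - i)) (of_nat m - 5) * ?r (m - i) else 0)"
    by (subst sum_distrib_left) (rule sum.cong, simp_all)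
  also have "\<dots> = 0"
  proof (cases "m < 5")
    case True
    then have "m = 0 \<or> m = 1 \<or> m = 2 \<or> m = 3 \<or> m = 4" by arith
    then have "poly gq (of_nat m - 5) = 0" by (elim disjE) (simp_all add: poly_gq)
    then show ?thesis by simp
  next
    case False
    then obtain n where m: "m = n + 5" by (metis add.commute le_Suc_ex not_less)
    have "(\<Sum>i=0..m. if i \<le> 5 then poly (hr (5 - i)) (of_nat m - 5) * ?r (m - i) else 0)
        = (\<Sum>i\<in>{..5}. if i \<le> 5 then poly (hr (5 - i)) (of_nat m - 5) * ?r (m - i) else 0)"
      by (rule sum.mono_neutral_right) (auto simp: m)
    also have "\<dots> = (\<Sum>i\<le>5. poly (hr (5 - i)) (of_nat m - 5) * ?r (m - i))" by simp
    also have "(\<Sum>i\<le>5. poly (hr (5 - i)) (of_nat m - 5) * ?r (m - i))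
        = (\<Sum>j\<le>5. poly (hr j) (of_nat n) * ?r (n + j))"
      by (simp add: sum_le5 m add.commute add.left_commute)
    also have "\<dots> = of_int (\<Sum>j\<le>5. poly (h j) (int n) * int (r24 (n + j)))"
      by (simp add: poly_hr)
    also have "\<dots> = 0" by (simp add: rec_int)
    finally show ?thesis by simp
  qed
  finally show ?thesis .
qed

theorem theorem8:
  shows "(\<exists>h :: nat \<Rightarrow> int poly.
            (\<forall>j\<le>5. degree (h j) = 6) \<and>
            (\<forall>n. (\<Sum>j\<le>5. poly (h j) (int n) * int (r24 (n + j))) = 0))
       \<and> (\<exists>u :: nat \<Rightarrow> rat poly.
            u 11 \<noteq> 0 \<and>
            (\<forall>k\<le>11. degree (u k) \<le> 5) \<and> (\<exists>k\<le>11. degree (u k) = 5) \<and>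
            (\<Sum>k\<le>11. fps_of_poly (u k) * (theta ^^ k) R24) = 0)"
proof (intro conjI)
  show "\<exists>h :: nat \<Rightarrow> int poly. (\<forall>j\<le>5. degree (h j) = 6) \<and>
            (\<forall>n. (\<Sum>j\<le>5. poly (h j) (int n) * int (r24 (n + j))) = 0)"
    using deg_h rec_int by blast
  show "\<exists>u :: nat \<Rightarrow> rat poly.
            u 11 \<noteq> 0 \<and>
            (\<forall>k\<le>11. degree (u k) \<le> 5) \<and> (\<exists>k\<le>11. degree (u k) = 5) \<and>
            (\<Sum>k\<le>11. fps_of_poly (u k) * (theta ^^ k) R24) = 0"
  proof (rule exI[of _ u], intro conjI)
    show "u 11 \<noteq> 0" by (rule u11)
    show "\<forall>k\<le>11. degree (u k) \<le> 5" using degree_u by blast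
    show "\<exists>k\<le>11. degree (u k) = 5" using u11 by blast
    show "(\<Sum>k\<le>11. fps_of_poly (u k) * (theta ^^ k) R24) = 0"
      by (rule fps_ext) (simp only: ode_coeff fps_zero_nth)
  qed
qed

end
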